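(* Let $(W,S)$ be the Coxeter system of type $A_\infty^{\langle1\rangle}$: $S=\{s_i\mid i\ge1\}$, $m(s_i,s_{i+1})=3$, and $m(s_i,s_j)=2$ for $|i-j|\ge2$. Write $\alpha_i=\alpha_{s_i}$, let $\beta_i=\alpha_{2i-1}+\alpha_{2i}$ (a positive root) for $i\ge1$, let $X=\{s_{\beta_i}\mid i\ge1\}$ (so $s_{\beta_i}=s_{2i-1}s_{2i}s_{2i-1}$) and $G=\langle X\rangle$. Then: $S(G)=X$ and $(G,X)$ is a Coxeter system of type $A_\infty^{\langle1\rangle}$ (in particular irreducible); $G$ is not a parabolic subgroup of $W$; for each $i\ge1$ the subgroup $G_i=\langle\{s_{\beta_j}\mid 1\le j\le i\}\cup\{s_k\mid k\ge 2i+1\}\rangle$ is a parabolic subgroup of $W$ containing $G$, with $G_1\supsetneq G_2\supsetneq\cdots$ and $\bigcap_{i\ge1}G_i=G$; and consequently the parabolic closure satisfies $P(X)=G$, which is not a parabolic subgroup.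
   Context: Geometric representation: $V$ with basis $\{\alpha_s\}$, root system $\Phi=W\cdot\{\alpha_s\}$, reflection $s_\gamma$ for $\gamma\in\Phi$. For a reflection subgroup $G$, $S(G)=\{s_\gamma\mid\gamma\in\Pi(G)\}$ where $\Pi(G)$ is the set of positive roots $\gamma$ with $s_\gamma\in G$ not expressible as a positive linear combination of other positive roots $\beta$ with $s_\beta\in G$; $(G,S(G))$ is a Coxeter system. A parabolic subgroup is a conjugate $wW_Iw^{-1}$ of $W_I=\langle I\rangle$, $I\subseteq S$. The parabolic closure $P(X)$ is the intersection of all parabolic subgroups containing $X$. *)

theory Defs
  imports "HOL-Algebra.Algebra"
begin

text \<open>(G,S) is a Coxeter system: S is a generating set of involutions of the group G and
G has the presentation  < S | (s t)^m(s,t) = 1 >  where m(s,t) is the order of s t in G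
(no relation when the order is infinite).  The presentation is expressed by its universal
property: every map of S into a group H respecting these relations extends to a
homomorphism.  The type of the target groups H is given by the itself-argument; in the
main theorem it is a free (hence universally quantified) type variable.\<close>

definition coxeter_system :: "'h itself \<Rightarrow> ('a, 'b) monoid_scheme \<Rightarrow> 'a set \<Rightarrow> bool" where
  "coxeter_system _ G S \<longleftrightarrow>
     group G \<and> S \<subseteq> carrier G \<and> generate G S = carrier G \<and>
     (\<forall>s\<in>S. s \<noteq> \<one>\<^bsub>G\<^esub> \<and> s \<otimes>\<^bsub>G\<^esub> s = \<one>\<^bsub>G\<^esub>) \<and>
     (\<forall>(H :: 'h monoid) \<phi>. group H \<and> \<phi> \<in> S \<rightarrow> carrier H \<and>
        (\<forall>s\<in>S. \<forall>t\<in>S. \<forall>n::nat.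
            (s \<otimes>\<^bsub>G\<^esub> t) [^]\<^bsub>G\<^esub> n = \<one>\<^bsub>G\<^esub> \<longrightarrow>
            (\<phi> s \<otimes>\<^bsub>H\<^esub> \<phi> t) [^]\<^bsub>H\<^esub> n = \<one>\<^bsub>H\<^esub>)
      \<longrightarrow> (\<exists>h \<in> hom G H. \<forall>s\<in>S. h s = \<phi> s))"

definition mA :: "nat \<Rightarrow> nat \<Rightarrow> nat" where
  "mA i j = (if i = j then 1 else if i = j + 1 \<or> j = i + 1 then 3 else 2)"

definition coxeter_system_A_inf :: "'h itself \<Rightarrow> ('a, 'b) monoid_scheme \<Rightarrow> 'a set \<Rightarrow> bool" where
  "coxeter_system_A_inf T G S \<longleftrightarrow> coxeter_system T G S \<and>
     (\<exists>e. bij_betw e {1..} S \<and>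
          (\<forall>i\<ge>1. \<forall>j\<ge>1. group.ord G (e i \<otimes>\<^bsub>G\<^esub> e j) = mA i j))"

text \<open>V has basis alpha_i (i >= 1); vectors are modelled as functions nat => real
(coordinate 0 is unused).  The bilinear form is B(alpha_i,alpha_i)=1,
B(alpha_i,alpha_{i+1}) = -1/2 = -cos(pi/3), and 0 otherwise.\<close>

type_synonym vec = "nat \<Rightarrow> real"
type_synonym lmap = "vec \<Rightarrow> vec"

definition alpha :: "nat \<Rightarrow> vec" where
  "alpha i = (\<lambda>k. if k = i then 1 else 0)"

definition Bsimple :: "nat \<Rightarrow> vec \<Rightarrow> real" where
  "Bsimple i v = v i - (if i \<ge> 2 then v (i - 1) else 0) / 2 - v (i + 1) / 2"

text \<open>B(u, v) for finitely supported u.\<close>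
definition Bform :: "vec \<Rightarrow> vec \<Rightarrow> real" where
  "Bform u v = (\<Sum>i\<in>{i. u i \<noteq> 0}. u i * Bsimple i v)"

definition sref :: "vec \<Rightarrow> lmap" where
  "sref \<gamma> v = (\<lambda>k. v k - 2 * Bform \<gamma> v * \<gamma> k)"

definition s :: "nat \<Rightarrow> lmap" where
  "s i = sref (alpha i)"

definition Sgen :: "lmap set" where
  "Sgen = {s i | i. i \<ge> 1}"

text \<open>W = the group of linear maps generated by the simple reflections (the geometric
representation is faithful, so this is W).\<close>
inductive_set Wset :: "lmap set" where
  Wid: "id \<in> Wset"
| Wstep: "w \<in> Wset \<Longrightarrow> i \<ge> 1 \<Longrightarrow> s i \<circ> w \<in> Wset"

definition Wgrp :: "lmap monoid" where
  "Wgrp = \<lparr>carrier = Wset, monoid.mult = (\<circ>), one = id\<rparr>"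

definition genW :: "lmap set \<Rightarrow> lmap set" where
  "genW Y = generate Wgrp Y"

definition Phi :: "vec set" where
  "Phi = {w (alpha i) | w i. w \<in> Wset \<and> i \<ge> 1}"

definition Phi_pos :: "vec set" where
  "Phi_pos = {\<gamma> \<in> Phi. \<forall>k. \<gamma> k \<ge> 0}"

definition Pi_of :: "lmap set \<Rightarrow> vec set" where
  "Pi_of G = {\<gamma> \<in> Phi_pos. sref \<gamma> \<in> G \<and>
      \<not> (\<exists>F c. finite F \<and> F \<noteq> {} \<and>
             F \<subseteq> {\<beta> \<in> Phi_pos. sref \<beta> \<in> G \<and> \<beta> \<noteq> \<gamma>} \<and>
             (\<forall>\<beta>\<in>F. c \<beta> > (0::real)) \<and>
             (\<forall>k. \<gamma> k = (\<Sum>\<beta>\<in>F. c \<beta> * \<beta> k)))}"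

definition S_of :: "lmap set \<Rightarrow> lmap set" where
  "S_of G = sref ` Pi_of G"

definition parabolic :: "lmap set \<Rightarrow> bool" where
  "parabolic H \<longleftrightarrow> (\<exists>w\<in>Wset. \<exists>I. I \<subseteq> Sgen \<and>
      H = {w \<circ> u \<circ> inv\<^bsub>Wgrp\<^esub> w | u. u \<in> genW I})"

definition parabolic_closure :: "lmap set \<Rightarrow> lmap set" where
  "parabolic_closure Y = \<Inter>{H. parabolic H \<and> Y \<subseteq> H}"

definition beta :: "nat \<Rightarrow> vec" where
  "beta i = (\<lambda>k. alpha (2*i - 1) k + alpha (2*i) k)"

definition Xset :: "lmap set" where
  "Xset = {sref (beta i) | i. i \<ge> 1}"

definition Gsub :: "nat \<Rightarrow> lmap set" where
  "Gsub i = genW ({sref (beta j) | j. 1 \<le> j \<and> j \<le> i} \<union> {s k | k. k \<ge> 2*i + 1})"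

end

theory Submission
  imports Defs "HOL-Combinatorics.Permutations"
begin


abbreviation ivf :: "('a \<Rightarrow> 'b) \<Rightarrow> 'b \<Rightarrow> 'a" where "ivf f \<equiv> inv_into UNIV f"

definition Xd :: "vec \<Rightarrow> nat \<Rightarrow> real" where
  "Xd v j = v j - (if j \<ge> 2 then v (j - 1) else 0)"

definition Perm :: "(nat \<Rightarrow> nat) \<Rightarrow> lmap" where
  "Perm p v = (\<lambda>k. if k = 0 then v 0 else (\<Sum>j\<in>{1..k}. Xd v (p j)))"

definition E :: "nat \<Rightarrow> vec" where
  "E k = (\<lambda>j. if k \<le> j then 1 else 0)"

definition r :: "nat \<Rightarrow> nat \<Rightarrow> vec" where
  "r a c = (\<lambda>j. E a j - E c j)"

lemma telescope: "k \<ge> 1 \<Longrightarrow> (\<Sum>j\<in>{1..k}. Xd v j) = v k"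
proof (induction k)
  case 0 then show ?case by simp
next
  case (Suc k)
  show ?case
  proof (cases "k = 0")
    case True then show ?thesis by (simp add: Xd_def)
  next
    case False
    then have "(\<Sum>j\<in>{1..Suc k}. Xd v j) = (\<Sum>j\<in>{1..k}. Xd v j) + Xd v (Suc k)"
      by (simp add: sum.cl_ivl_Suc)
    also have "\<dots> = v (Suc k)" using Suc False by (simp add: Xd_def)
    finally show ?thesis .
  qed
qed

lemma Xd_Perm: "j \<ge> 1 \<Longrightarrow> Xd (Perm p v) j = Xd v (p j)"
proof (cases "j = 1")
  case True then show ?thesis by (simp add: Xd_def Perm_def)
next
  case False
  assume "j \<ge> 1"
  then obtain i where i: "j = Suc i" "i \<ge> 1" using False by (cases j) auto
  then show ?thesis by (simp add: Xd_def Perm_def sum.cl_ivl_Suc)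
qed

lemma Perm_0[simp]: "Perm p v 0 = v 0"
  by (simp add: Perm_def)

lemma Perm_pos: "k \<noteq> 0 \<Longrightarrow> Perm p v k = (\<Sum>j\<in>{1..k}. Xd v (p j))"
  by (simp add: Perm_def)

lemma Perm_comp: "(\<And>j. j \<ge> 1 \<Longrightarrow> q j \<ge> 1) \<Longrightarrow> Perm q \<circ> Perm p = Perm (p \<circ> q)"
proof (rule ext, rule ext)
  fix v k assume q: "\<And>j. j \<ge> 1 \<Longrightarrow> q j \<ge> 1"
  show "(Perm q \<circ> Perm p) v k = Perm (p \<circ> q) v k"
  proof (cases "k = 0")
    case False
    then show ?thesis using q by (simp add: Perm_pos Xd_Perm)
  qed simp
qed

lemma Perm_comp_apply: "(\<And>j. j \<ge> 1 \<Longrightarrow> q j \<ge> 1) \<Longrightarrow> Perm q (Perm p v) = Perm (p \<circ> q) v"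
  using Perm_comp[of q p] by (metis comp_apply)

lemma telescope': "0 < k \<Longrightarrow> sum (Xd v) {Suc 0..k} = v k"
  using telescope[of k v] by simp

lemma Perm_id: "Perm id = id"
  by (rule ext, rule ext) (simp add: Perm_def telescope')

lemma Perm_inj:
  assumes "p 0 = 0" "q 0 = 0" "Perm p = Perm q" shows "p = q"
proof (rule ext)
  fix j
  define w :: vec where "w = (\<lambda>k. \<Sum>i\<in>{1..k}. real i)"
  have Xw: "Xd w i = real i" for i
  proof (cases "i \<ge> 2")
    case True
    then obtain l where "i = Suc l" "l \<ge> 1" by (cases i) auto
    then show ?thesis by (simp add: Xd_def w_def sum.cl_ivl_Suc)
  next
    case False then have "i = 0 \<or> i = 1" by auto
    then show ?thesis by (auto simp: Xd_def w_def)
  qed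
  show "p j = q j"
  proof (cases "j = 0")
    case True then show ?thesis using assms by simp
  next
    case False
    have "Xd (Perm p w) j = Xd (Perm q w) j" using assms by simp
    then show ?thesis using False by (simp add: Xd_Perm Xw)
  qed
qed

lemma Xd_E: "k \<ge> 1 \<Longrightarrow> Xd (E k) j = (if j = k then 1 else 0)"
  by (auto simp: Xd_def E_def)

lemma Perm_E:
  assumes "bij p" "p 0 = 0" "k \<ge> 1"
  shows "Perm p (E k) = E (ivf p k)"
proof -
  have ik: "ivf p k \<noteq> 0"
    using assms by (metis bij_inv_eq_iff not_one_le_zero)
  show ?thesis
  proof (rule ext)
    fix m
    show "Perm p (E k) m = E (ivf p k) m"
    proof (cases "m = 0")
      case True then show ?thesis using assms ik by (simp add: Perm_def E_def)
    next
      case False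
      have "(\<Sum>j\<in>{1..m}. Xd (E k) (p j)) = (\<Sum>j\<in>{1..m}. if j = ivf p k then 1 else 0)"
        using assms by (intro sum.cong) (auto simp: Xd_E bij_inv_eq_iff)
      also have "\<dots> = (if ivf p k \<in> {1..m} then 1 else 0)"
        by (simp add: sum.delta)
      finally show ?thesis using False ik by (simp add: Perm_def E_def)
    qed
  qed
qed

lemma Xd_diff: "Xd (\<lambda>j. u j - w j) i = Xd u i - Xd w i"
  by (simp add: Xd_def)

lemma Perm_diff: "Perm p (\<lambda>j. u j - w j) = (\<lambda>j. Perm p u j - Perm p w j)"
  by (rule ext) (simp add: Perm_def Xd_diff sum_subtractf)

lemma Perm_r:
  assumes "bij p" "p 0 = 0" "a \<ge> 1" "c \<ge> 1"
  shows "Perm p (r a c) = r (ivf p a) (ivf p c)"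
  unfolding r_def using assms by (simp add: Perm_diff Perm_E)

lemma Bsimple_Xd: "j \<ge> 1 \<Longrightarrow> Bsimple j v = (Xd v j - Xd v (Suc j)) / 2"
  by (auto simp: Bsimple_def Xd_def)

lemma r_support: "a < c \<Longrightarrow> {k. r a c k \<noteq> 0} = {a..<c}"
  by (auto simp: r_def E_def)

lemma Bform_r:
  assumes "1 \<le> a" "a < c"
  shows "Bform (r a c) v = (Xd v a - Xd v c) / 2"
proof -
  have "Bform (r a c) v = (\<Sum>j\<in>{a..<c}. Bsimple j v)"
    unfolding Bform_def r_support[OF assms(2)]
    by (intro sum.cong) (auto simp: r_def E_def)
  also have "\<dots> = (\<Sum>j\<in>{a..<c}. (Xd v j - Xd v (Suc j)) / 2)"
    using assms by (intro sum.cong) (auto simp: Bsimple_Xd)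
  also have "\<dots> = (\<Sum>j\<in>{a..<c}. Xd v j - Xd v (Suc j)) / 2"
    by (simp add: sum_divide_distrib)
  also have "(\<Sum>j\<in>{a..<c}. Xd v j - Xd v (Suc j)) = Xd v a - Xd v c"
    using sum_Suc_diff'[of a c "\<lambda>j. - Xd v j"] assms by simp
  finally show ?thesis .
qed

lemma sum_transpose_mid:
  fixes f :: "nat \<Rightarrow> real"
  assumes "1 \<le> a" "a \<le> k" "k < c"
  shows "(\<Sum>j\<in>{1..k}. f (Transposition.transpose a c j)) = (\<Sum>j\<in>{1..k}. f j) + (f c - f a)"
proof -
  have "(\<Sum>j\<in>{1..k}. f (Transposition.transpose a c j)) =
        (\<Sum>j\<in>{1..k}. f j + (if j = a then f c - f a else 0))"
  proof (rule sum.cong[OF refl])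
    fix j assume "j \<in> {1..k}"
    then have "j \<noteq> c" using assms(3) by (metis atLeastAtMost_iff leD)
    then show "f (Transposition.transpose a c j) = f j + (if j = a then f c - f a else 0)"
      by (auto simp: transpose_def)
  qed
  also have "\<dots> = (\<Sum>j\<in>{1..k}. f j) + (f c - f a)"
    using assms by (simp add: sum.distrib sum.delta)
  finally show ?thesis .
qed

lemma sum_transpose_out:
  assumes "a \<in> {1..k}" "c \<in> {1..k}"
  shows "(\<Sum>j\<in>{1..k}. f (Transposition.transpose a c j)) = (\<Sum>j\<in>{1..k}. f j)"
proof -
  have "transpose a c permutes {1..k}" using assms by (rule permutes_swap_id)
  from sum.permute[OF this, of f] show ?thesis by (simp add: comp_def)
qed

lemma sref_r:
  assumes "1 \<le> a" "a < c"
  shows "sref (r a c) = Perm (Transposition.transpose a c)"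
proof (rule ext, rule ext)
  fix v k
  have B: "Bform (r a c) v = (Xd v a - Xd v c) / 2" using Bform_r assms by simp
  show "sref (r a c) v k = Perm (Transposition.transpose a c) v k"
  proof (cases "k = 0")
    case True then show ?thesis using assms by (simp add: sref_def Perm_def r_def E_def)
  next
    case False
    consider "k < a" | "a \<le> k \<and> k < c" | "c \<le> k" by linarith
    then show ?thesis
    proof cases
      case 1
      have "(\<Sum>j\<in>{1..k}. Xd v (Transposition.transpose a c j)) = (\<Sum>j\<in>{1..k}. Xd v j)"
        using 1 assms by (intro sum.cong) auto
      then show ?thesis using 1 False assms by (simp add: sref_def Perm_def r_def E_def B telescope')
    next
      case 2
      have rk: "r a c k = 1" using 2 by (simp add: r_def E_def)
      have "(\<Sum>j\<in>{1..k}. Xd v (Transposition.transpose a c j)) = (\<Sum>j\<in>{1..k}. Xd v j) + (Xd v c - Xd v a)"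
        using 2 assms by (intro sum_transpose_mid) auto
      also have "\<dots> = v k + (Xd v c - Xd v a)" using False telescope[of k v] by simp
      finally have "(\<Sum>j\<in>{1..k}. Xd v (Transposition.transpose a c j)) = v k + (Xd v c - Xd v a)" .
      then show ?thesis using False rk by (simp add: sref_def Perm_def B field_simps)
    next
      case 3
      have "(\<Sum>j\<in>{1..k}. Xd v (Transposition.transpose a c j)) = (\<Sum>j\<in>{1..k}. Xd v j)"
        using 3 assms by (intro sum_transpose_out) auto
      also have "\<dots> = v k" using False telescope[of k v] by simp
      finally show ?thesis using 3 False assms
        by (simp add: sref_def Perm_def r_def E_def)
    qed
  qed
qed

lemma alpha_r: "i \<ge> 1 \<Longrightarrow> alpha i = r i (Suc i)"
  by (auto simp: alpha_def r_def E_def)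

lemma s_Perm: "i \<ge> 1 \<Longrightarrow> s i = Perm (Transposition.transpose i (Suc i))"
  by (simp add: s_def alpha_r sref_r)

lemma beta_r: "i \<ge> 1 \<Longrightarrow> beta i = r (2*i - 1) (2*i + 1)"
  by (rule ext) (auto simp: beta_def alpha_def r_def E_def split: if_splits)

definition tb :: "nat \<Rightarrow> nat \<Rightarrow> nat" where
  "tb i = Transposition.transpose (2*i - 1) (2*i + 1)"

lemma sref_beta: "i \<ge> 1 \<Longrightarrow> sref (beta i) = Perm (tb i)"
  by (simp add: beta_r sref_r tb_def)


definition pos :: "(nat \<Rightarrow> nat) \<Rightarrow> bool" where
  "pos q \<longleftrightarrow> (\<forall>j\<ge>1. q j \<ge> 1)"

lemma Perm_o: "pos q \<Longrightarrow> Perm (p \<circ> q) = Perm q \<circ> Perm p"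
  using Perm_comp[of q p] by (simp add: pos_def)

lemma pos_transpose: "a \<ge> 1 \<Longrightarrow> b \<ge> 1 \<Longrightarrow> pos (Transposition.transpose a b)"
  by (auto simp: pos_def transpose_def)

lemma pos_permutes: "p permutes {1..n} \<Longrightarrow> pos p"
  unfolding pos_def
  by (metis atLeastAtMost_iff permutes_in_image permutes_not_in)

lemma permutes_0: "p permutes {1..(n::nat)} \<Longrightarrow> p 0 = 0"
  by (rule permutes_not_in) auto

lemma s_W: "i \<ge> 1 \<Longrightarrow> s i \<in> Wset"
  using Wset.Wstep[OF Wset.Wid, of i] by simp

lemma W_comp: "w1 \<in> Wset \<Longrightarrow> w2 \<in> Wset \<Longrightarrow> w1 \<circ> w2 \<in> Wset"
proof (induction w1 rule: Wset.induct)
  case Wid then show ?case by simp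
next
  case (Wstep w i)
  have "s i \<circ> w \<circ> w2 = s i \<circ> (w \<circ> w2)" by (simp add: comp_assoc)
  then show ?case using Wstep Wset.Wstep by metis
qed

lemma Perm_transp_invol: "a \<ge> 1 \<Longrightarrow> b \<ge> 1 \<Longrightarrow>
   Perm (Transposition.transpose a b) \<circ> Perm (Transposition.transpose a b) = id"
  using Perm_o[OF pos_transpose, of a b "Transposition.transpose a b"] by (simp add: Perm_id)

lemma s_invol: "i \<ge> 1 \<Longrightarrow> s i \<circ> s i = id"
  by (simp add: s_Perm Perm_transp_invol)

lemma W_inv: "w \<in> Wset \<Longrightarrow> \<exists>w'\<in>Wset. w' \<circ> w = id \<and> w \<circ> w' = id"
proof (induction w rule: Wset.induct)
  case Wid then show ?case by (intro bexI[of _ id]) (auto intro: Wset.Wid)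
next
  case (Wstep w i)
  then obtain w' where w': "w' \<in> Wset" "w' \<circ> w = id" "w \<circ> w' = id" by blast
  have "w' \<circ> s i \<in> Wset" using W_comp[OF w'(1) s_W[OF Wstep(2)]] .
  moreover have "(w' \<circ> s i) \<circ> (s i \<circ> w) = id"
    by (metis Wstep.hyps(2) comp_assoc comp_id s_invol w'(2))
  moreover have "(s i \<circ> w) \<circ> (w' \<circ> s i) = id"
    by (metis Wstep.hyps(2) comp_assoc comp_id s_invol w'(3))
  ultimately show ?case by blast
qed

lemma W_carrier[simp]: "carrier Wgrp = Wset" and W_mult[simp]: "x \<otimes>\<^bsub>Wgrp\<^esub> y = x \<circ> y"
  and W_one[simp]: "\<one>\<^bsub>Wgrp\<^esub> = id"
  by (simp_all add: Wgrp_def)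

lemma group_W: "group Wgrp"
proof (rule groupI)
  fix x assume "x \<in> carrier Wgrp"
  then show "\<exists>y\<in>carrier Wgrp. y \<otimes>\<^bsub>Wgrp\<^esub> x = \<one>\<^bsub>Wgrp\<^esub>"
    using W_inv by auto
qed (simp_all add: W_comp Wset.Wid comp_assoc)

lemma W_inv_eq: "w \<in> Wset \<Longrightarrow> w' \<in> Wset \<Longrightarrow> w' \<circ> w = id \<Longrightarrow> inv\<^bsub>Wgrp\<^esub> w = w'"
  using group.inv_equality[OF group_W, of w' w] by simp

lemma W_inv_props: "w \<in> Wset \<Longrightarrow> inv\<^bsub>Wgrp\<^esub> w \<in> Wset \<and> inv\<^bsub>Wgrp\<^esub> w \<circ> w = id \<and> w \<circ> inv\<^bsub>Wgrp\<^esub> w = id"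
  using W_inv W_inv_eq by metis

lemma W_Perm: "w \<in> Wset \<Longrightarrow> \<exists>p n. p permutes {1..n} \<and> w = Perm p"
proof (induction w rule: Wset.induct)
  case Wid then show ?case using Perm_id by (metis permutes_id)
next
  case (Wstep w i)
  then obtain p n where p: "p permutes {1..n}" "w = Perm p" by auto
  define m where "m = max n (Suc i)"
  have pm: "p permutes {1..m}" using p(1) by (rule permutes_subset) (auto simp: m_def)
  have tm: "Transposition.transpose i (Suc i) permutes {1..m}"
    using Wstep(2) by (intro permutes_swap_id) (auto simp: m_def)
  have "s i \<circ> w = Perm (p \<circ> Transposition.transpose i (Suc i))"
    using Wstep(2) p(2) by (simp add: s_Perm Perm_o pos_transpose)
  moreover have "p \<circ> Transposition.transpose i (Suc i) permutes {1..m}"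
    using permutes_compose[OF tm pm] .
  ultimately show ?case by blast
qed

lemma Perm_transp_W:
  assumes "1 \<le> a" "a < b" shows "Perm (Transposition.transpose a b) \<in> Wset"
  using assms
proof (induction "b - a" arbitrary: a rule: less_induct)
  case less
  show ?case
  proof (cases "b = Suc a")
    case True then show ?thesis using less s_W s_Perm by simp
  next
    case False
    then have ab: "Suc a < b" using less by simp
    have eq: "Transposition.transpose a b = Transposition.transpose a (Suc a) \<circ>
       Transposition.transpose (Suc a) b \<circ> Transposition.transpose a (Suc a)"
      using ab by (auto simp: transpose_def fun_eq_iff)
    have IH: "Perm (Transposition.transpose (Suc a) b) \<in> Wset"
      using less ab by (intro less.hyps) auto
    have "Perm (Transposition.transpose a b) = s a \<circ> Perm (Transposition.transpose (Suc a) b) \<circ> s a"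
      unfolding eq using less ab
      by (simp add: Perm_o pos_transpose s_Perm o_assoc)
    then show ?thesis using IH s_W less W_comp by simp
  qed
qed

lemma Perm_W: assumes "p permutes {1..n}" shows "Perm p \<in> Wset"
  using assms finite_atLeastAtMost[of 1 n]
proof (induction rule: permutes_induct)
  case id then show ?case by (metis Perm_id Wset.Wid)
next
  case (swap a b p)
  have eq: "Perm (Transposition.transpose a b \<circ> p) = Perm p \<circ> Perm (Transposition.transpose a b)"
    using swap pos_permutes by (simp add: Perm_o)
  have tW: "Perm (Transposition.transpose a b) \<in> Wset"
  proof (cases "a < b")
    case True then show ?thesis using swap by (intro Perm_transp_W) auto
  next
    case False then have "b < a" using swap by auto
    then show ?thesis using swap Perm_transp_W[of b a] by (auto simp: transpose_commute)
  qed
  have "Perm p \<in> Wset" using swap by simp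
  then show ?case unfolding eq using tW W_comp by blast
qed

lemma Perm_inv_W:
  assumes "p permutes {1..n}"
  shows "inv\<^bsub>Wgrp\<^esub> (Perm p) = Perm (ivf p)"
proof (rule W_inv_eq)
  show "Perm p \<in> Wset" using Perm_W[OF assms] .
  show "Perm (ivf p) \<in> Wset" using Perm_W[OF permutes_inv[OF assms]] .
  have "Perm (ivf p) \<circ> Perm p = Perm (p \<circ> ivf p)"
    using pos_permutes[OF permutes_inv[OF assms]] by (simp add: Perm_o)
  then show "Perm (ivf p) \<circ> Perm p = id"
    using permutes_inv_o(1)[OF assms] by (simp add: Perm_id)
qed

lemma Perm_E': assumes "p permutes {1..n}" "k \<ge> 1" shows "Perm p (E k) = E (ivf p k)"
  by (rule Perm_E[OF permutes_bij[OF assms(1)] permutes_0[OF assms(1)] assms(2)])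

lemma E_inj: "a \<ge> 1 \<Longrightarrow> b \<ge> 1 \<Longrightarrow> E a = E b \<Longrightarrow> a = b"
proof (rule ccontr)
  assume "E a = E b" "a \<noteq> b"
  from \<open>a \<noteq> b\<close> have "E a a \<noteq> E b a \<or> E a b \<noteq> E b b" by (auto simp: E_def)
  then show False using \<open>E a = E b\<close> by auto
qed

lemma W_fix_large: "w \<in> Wset \<Longrightarrow> \<exists>N. \<forall>k>N. w (E k) = E k"
proof -
  assume "w \<in> Wset"
  then obtain p n where p: "p permutes {1..n}" "w = Perm p" using W_Perm by blast
  have "\<forall>k>n. w (E k) = E k"
  proof (intro allI impI)
    fix k assume "k > n"
    then have "ivf p k = k" using permutes_inv[OF p(1)] by (simp add: permutes_not_in)
    then show "w (E k) = E k" using p \<open>k > n\<close> by (simp add: Perm_E')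
  qed
  then show ?thesis by blast
qed

lemma gen_fix:
  assumes "A \<subseteq> Wset" "\<And>a. a \<in> A \<Longrightarrow> a (E k) = E k" "g \<in> genW A"
  shows "g \<in> Wset \<and> g (E k) = E k"
  using assms(3) unfolding genW_def
proof (induction rule: generate.induct)
  case one then show ?case by (metis W_one Wset.Wid id_apply)
next
  case (incl h) then show ?case using assms by auto
next
  case (inv h)
  then have h: "h \<in> Wset" "h (E k) = E k" using assms by auto
  then have "(inv\<^bsub>Wgrp\<^esub> h) (h (E k)) = E k" using W_inv_props[OF h(1)] by (metis comp_apply id_apply)
  then show ?case using h W_inv_props[OF h(1)] by simp
next
  case (eng h1 h2)
  have "h1 \<circ> h2 \<in> Wset" using eng W_comp by blast
  then show ?case using eng by (simp add: comp_def)
qed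

lemma genW_W: "A \<subseteq> Wset \<Longrightarrow> genW A \<subseteq> Wset"
  unfolding genW_def using group.generate_incl[OF group_W] by simp

lemma genW_subgroup: "A \<subseteq> Wset \<Longrightarrow> subgroup (genW A) Wgrp"
  unfolding genW_def using group.generate_is_subgroup[OF group_W] by simp

lemma genW_min: "A \<subseteq> K \<Longrightarrow> subgroup K Wgrp \<Longrightarrow> genW A \<subseteq> K"
  unfolding genW_def using group.generate_subgroup_incl[OF group_W] by simp

lemma genW_incl: "A \<subseteq> genW A"
  unfolding genW_def by (auto intro: generate.incl)


definition T :: "nat \<Rightarrow> nat \<Rightarrow> nat" where
  "T i = Transposition.transpose i (Suc i)"

definition C :: "nat \<Rightarrow> nat \<Rightarrow> nat \<Rightarrow> nat" where
  "C k m x = (if k < m then (if x = m then k else if k \<le> x \<and> x < m then Suc x else x) else x)"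

definition D :: "nat \<Rightarrow> nat \<Rightarrow> nat \<Rightarrow> nat" where
  "D k m x = (if k < m then (if x = k then m else if k < x \<and> x \<le> m then x - 1 else x) else x)"

lemma C_T: "k < m \<Longrightarrow> C k m = T k \<circ> C (Suc k) m"
  by (auto simp: fun_eq_iff C_def T_def transpose_def)

lemma DC: "D k m \<circ> C k m = id"
  by (auto simp: fun_eq_iff C_def D_def)

lemma CD: "C k m \<circ> D k m = id"
  by (auto simp: fun_eq_iff C_def D_def)

lemma DT: "k < m \<Longrightarrow> D (Suc k) m \<circ> T k = D k m"
  by (auto simp: fun_eq_iff D_def T_def transpose_def)

lemma DT_comm: "Suc i < k \<Longrightarrow> D k m \<circ> T i = T i \<circ> D k m"
  by (auto simp: fun_eq_iff D_def T_def transpose_def)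

lemma DT_shift: "k < i \<Longrightarrow> i < m \<Longrightarrow> D k m \<circ> T i = T (i - 1) \<circ> D k m"
  by (auto simp: fun_eq_iff D_def T_def transpose_def)

lemma TT: "T i \<circ> T i = id"
  by (simp add: T_def)

lemma C_permutes: "1 \<le> k \<Longrightarrow> m \<le> n \<Longrightarrow> C k m permutes {1..n}"
proof (rule inj_imp_permutes)
  show "inj_on (C k m) {1..n}" using DC by (metis inj_on_id inj_on_imageI2 image_id)
qed (auto simp: C_def)

lemma D_permutes: "1 \<le> k \<Longrightarrow> m \<le> n \<Longrightarrow> D k m permutes {1..n}"
proof (rule inj_imp_permutes)
  show "inj_on (D k m) {1..n}" using CD by (metis inj_on_id inj_on_imageI2 image_id)
qed (auto simp: D_def)

lemma T_permutes: "1 \<le> i \<Longrightarrow> i < n \<Longrightarrow> T i permutes {1..n}"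
  unfolding T_def by (rule permutes_swap_id) auto

lemma step_perm:
  assumes "p permutes {1..Suc n}"
  shows "D (p (Suc n)) (Suc n) \<circ> p permutes {1..n}"
proof -
  have k: "p (Suc n) \<in> {1..Suc n}" using assms permutes_in_image by fastforce
  have P: "D (p (Suc n)) (Suc n) \<circ> p permutes {1..Suc n}"
    using k by (intro permutes_compose[OF assms] D_permutes) auto
  have F: "(D (p (Suc n)) (Suc n) \<circ> p) (Suc n) = Suc n"
    using k by (simp add: D_def)
  show ?thesis
  proof (rule permutes_superset[OF P])
    fix x assume "x \<in> {1..Suc n} - {1..n}"
    then have "x = Suc n" by auto
    then show "(D (p (Suc n)) (Suc n) \<circ> p) x = x" using F by simp
  qed
qed

locale coxrel = group H for H (structure) +
  fixes f :: "nat \<Rightarrow> 'a"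
  assumes f_carr: "i \<ge> 1 \<Longrightarrow> f i \<in> carrier H"
    and f_inv: "i \<ge> 1 \<Longrightarrow> f i \<otimes> f i = \<one>"
    and f_comm: "i \<ge> 1 \<Longrightarrow> Suc i < j \<Longrightarrow> f i \<otimes> f j = f j \<otimes> f i"
    and f_braid: "i \<ge> 1 \<Longrightarrow> f i \<otimes> f (Suc i) \<otimes> f i = f (Suc i) \<otimes> f i \<otimes> f (Suc i)"
begin

primrec cycd :: "nat \<Rightarrow> nat \<Rightarrow> 'a" where
  "cycd k 0 = \<one>"
| "cycd k (Suc d) = f k \<otimes> cycd (Suc k) d"

definition cyc :: "nat \<Rightarrow> nat \<Rightarrow> 'a" where
  "cyc k m = cycd k (m - k)"

lemma cycd_carr: "k \<ge> 1 \<Longrightarrow> cycd k d \<in> carrier H"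
  by (induction d arbitrary: k) (auto simp: f_carr)

lemma cyc_carr: "k \<ge> 1 \<Longrightarrow> cyc k m \<in> carrier H"
  by (simp add: cyc_def cycd_carr)

lemma cyc_Suc: "k < m \<Longrightarrow> cyc k m = f k \<otimes> cyc (Suc k) m"
proof -
  assume "k < m"
  then have "m - k = Suc (m - Suc k)" by arith
  then show ?thesis by (simp add: cyc_def)
qed

lemma cyc_same: "cyc m m = \<one>"
  by (simp add: cyc_def)

lemma H1: "1 \<le> i \<Longrightarrow> Suc i < k \<Longrightarrow> f i \<otimes> cycd k d = cycd k d \<otimes> f i"
proof (induction d arbitrary: k)
  case 0 then show ?case by (simp add: f_carr)
next
  case (Suc d)
  have c: "f i \<in> carrier H" "f k \<in> carrier H" "cycd (Suc k) d \<in> carrier H"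
    using Suc by (auto simp: f_carr cycd_carr)
  have "f i \<otimes> cycd k (Suc d) = (f i \<otimes> f k) \<otimes> cycd (Suc k) d"
    using c by (simp add: m_assoc)
  also have "\<dots> = (f k \<otimes> f i) \<otimes> cycd (Suc k) d"
    using Suc f_comm[of i k] by simp
  also have "\<dots> = f k \<otimes> (f i \<otimes> cycd (Suc k) d)"
    using c by (simp add: m_assoc)
  also have "\<dots> = f k \<otimes> (cycd (Suc k) d \<otimes> f i)"
    using Suc by simp
  also have "\<dots> = cycd k (Suc d) \<otimes> f i"
    using c by (simp add: m_assoc)
  finally show ?case .
qed

lemma H1': "1 \<le> i \<Longrightarrow> Suc i < k \<Longrightarrow> f i \<otimes> cyc k m = cyc k m \<otimes> f i"
  by (simp add: cyc_def H1)

lemma H2: "1 \<le> k \<Longrightarrow> k < i \<Longrightarrow> i < k + d \<Longrightarrow> f i \<otimes> cycd k d = cycd k d \<otimes> f (i - 1)"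
proof (induction d arbitrary: k)
  case 0 then show ?case by simp
next
  case (Suc d)
  show ?case
  proof (cases "i = Suc k")
    case True
    then obtain d' where d': "d = Suc d'" using Suc by (cases d) auto
    have c: "cycd k (Suc d) = f k \<otimes> (f (Suc k) \<otimes> cycd (Suc (Suc k)) d')" by (simp add: d')
    have fk: "f k \<in> carrier H" "f (Suc k) \<in> carrier H" "cycd (Suc (Suc k)) d' \<in> carrier H"
      using Suc by (auto simp: f_carr cycd_carr)
    have com: "cycd (Suc (Suc k)) d' \<otimes> f k = f k \<otimes> cycd (Suc (Suc k)) d'"
      using H1[of k "Suc (Suc k)" d'] Suc by simp
    have "f i \<otimes> cycd k (Suc d) = (f (Suc k) \<otimes> f k \<otimes> f (Suc k)) \<otimes> cycd (Suc (Suc k)) d'"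
      using fk True c by (simp add: m_assoc)
    also have "\<dots> = (f k \<otimes> f (Suc k) \<otimes> f k) \<otimes> cycd (Suc (Suc k)) d'"
      using f_braid[of k] Suc by simp
    also have "\<dots> = f k \<otimes> f (Suc k) \<otimes> (f k \<otimes> cycd (Suc (Suc k)) d')"
      using fk by (simp add: m_assoc)
    also have "\<dots> = f k \<otimes> f (Suc k) \<otimes> (cycd (Suc (Suc k)) d' \<otimes> f k)"
      using com by simp
    also have "\<dots> = cycd k (Suc d) \<otimes> f (i - 1)"
      using fk True c by (simp add: m_assoc)
    finally show ?thesis .
  next
    case False
    then have ik: "Suc k < i" using Suc by simp
    have fk: "f k \<in> carrier H" "f i \<in> carrier H" "f (i - 1) \<in> carrier H" "cycd (Suc k) d \<in> carrier H"
      using Suc ik by (auto simp: f_carr cycd_carr)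
    have IH: "f i \<otimes> cycd (Suc k) d = cycd (Suc k) d \<otimes> f (i - 1)"
      using Suc ik by (intro Suc.IH) auto
    have "f i \<otimes> cycd k (Suc d) = (f i \<otimes> f k) \<otimes> cycd (Suc k) d"
      using fk by (simp add: m_assoc)
    also have "\<dots> = (f k \<otimes> f i) \<otimes> cycd (Suc k) d"
      using f_comm[of k i] Suc ik by simp
    also have "\<dots> = f k \<otimes> (f i \<otimes> cycd (Suc k) d)"
      using fk by (simp add: m_assoc)
    also have "\<dots> = cycd k (Suc d) \<otimes> f (i - 1)"
      using fk IH by (simp add: m_assoc)
    finally show ?thesis .
  qed
qed

lemma H2': "1 \<le> k \<Longrightarrow> k < i \<Longrightarrow> i < m \<Longrightarrow> f i \<otimes> cyc k m = cyc k m \<otimes> f (i - 1)"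
  unfolding cyc_def by (rule H2) auto

primrec hAn :: "nat \<Rightarrow> (nat \<Rightarrow> nat) \<Rightarrow> 'a" where
  "hAn 0 p = \<one>"
| "hAn (Suc n) p = cyc (p (Suc n)) (Suc n) \<otimes> hAn n (D (p (Suc n)) (Suc n) \<circ> p)"

lemma hAn_carr: "p permutes {1..n} \<Longrightarrow> hAn n p \<in> carrier H"
proof (induction n arbitrary: p)
  case 0 then show ?case by simp
next
  case (Suc n)
  have k: "p (Suc n) \<in> {1..Suc n}" using Suc permutes_in_image by fastforce
  then have "cyc (p (Suc n)) (Suc n) \<in> carrier H" by (simp add: cyc_carr)
  moreover have "hAn n (D (p (Suc n)) (Suc n) \<circ> p) \<in> carrier H"
    using Suc.IH step_perm[OF Suc.prems] by blast
  ultimately show ?case by simp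
qed

lemma KEY:
  "p permutes {1..n} \<Longrightarrow> 1 \<le> i \<Longrightarrow> i < n \<Longrightarrow> hAn n (T i \<circ> p) = f i \<otimes> hAn n p"
proof (induction n arbitrary: p i)
  case 0 then show ?case by simp
next
  case (Suc n)
  define k where "k = p (Suc n)"
  define m where "m = Suc n"
  define p' where "p' = D k m \<circ> p"
  have kr: "k \<in> {1..Suc n}" unfolding k_def using Suc permutes_in_image by fastforce
  have p': "p' permutes {1..n}" unfolding p'_def k_def m_def by (rule step_perm[OF Suc.prems(1)])
  have hp: "hAn (Suc n) p = cyc k m \<otimes> hAn n p'" by (simp add: k_def m_def p'_def)
  have carr: "f i \<in> carrier H" "cyc k m \<in> carrier H" "hAn n p' \<in> carrier H"
    using Suc kr p' by (auto simp: f_carr cyc_carr hAn_carr)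
  consider "Suc i < k" | "Suc i = k" | "i = k" | "k < i" by linarith
  then show ?case
  proof cases
    case 1
    have Tk: "(T i \<circ> p) (Suc n) = k" using 1 by (simp add: k_def T_def)
    have "D k m \<circ> (T i \<circ> p) = T i \<circ> p'" using DT_comm[OF 1, of m] unfolding p'_def by (metis comp_assoc)
    then have "hAn (Suc n) (T i \<circ> p) = cyc k m \<otimes> hAn n (T i \<circ> p')"
      using Tk unfolding m_def by (simp only: hAn.simps)
    also have "\<dots> = cyc k m \<otimes> (f i \<otimes> hAn n p')"
      using Suc 1 kr p' by (subst Suc.IH) auto
    also have "\<dots> = f i \<otimes> (cyc k m \<otimes> hAn n p')"
      using carr H1'[of i k m] Suc 1 by (simp add: m_assoc[symmetric])
    finally show ?thesis by (simp only: hp)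
  next
    case 2
    have Tk: "(T i \<circ> p) (Suc n) = i" using 2 by (simp add: k_def T_def)
    have im: "i < m" using 2 kr m_def by simp
    have "D i m \<circ> T i = D k m" using DT[OF im] TT 2
      by (metis comp_assoc comp_id)
    then have "D i m \<circ> (T i \<circ> p) = p'" by (simp add: p'_def comp_assoc[symmetric])
    then have "hAn (Suc n) (T i \<circ> p) = cyc i m \<otimes> hAn n p'"
      using Tk unfolding m_def by (simp only: hAn.simps)
    also have "\<dots> = f i \<otimes> (cyc k m \<otimes> hAn n p')"
      using carr im 2 by (simp add: cyc_Suc m_assoc)
    finally show ?thesis by (simp only: hp)
  next
    case 3
    have Tk: "(T i \<circ> p) (Suc n) = Suc k" using 3 by (simp add: k_def T_def)
    have km: "k < m" using 3 Suc m_def by simp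
    have "D (Suc k) m \<circ> (T i \<circ> p) = p'" using DT[OF km] 3 by (simp add: p'_def comp_assoc[symmetric])
    then have "hAn (Suc n) (T i \<circ> p) = cyc (Suc k) m \<otimes> hAn n p'"
      using Tk unfolding m_def by (simp only: hAn.simps)
    also have "\<dots> = f i \<otimes> (cyc k m \<otimes> hAn n p')"
      using carr km 3 Suc f_inv[of i] cyc_carr[of "Suc k" m]
      by (simp add: cyc_Suc m_assoc[symmetric])
    finally show ?thesis by (simp only: hp)
  next
    case 4
    have Tk: "(T i \<circ> p) (Suc n) = k" using 4 by (simp add: k_def T_def)
    have im: "i < m" using Suc m_def by simp
    have k1: "1 \<le> k" using kr by simp
    have "D k m \<circ> (T i \<circ> p) = T (i - 1) \<circ> p'"
      using DT_shift[OF 4 im] unfolding p'_def by (metis comp_assoc)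
    then have "hAn (Suc n) (T i \<circ> p) = cyc k m \<otimes> hAn n (T (i - 1) \<circ> p')"
      using Tk unfolding m_def by (simp only: hAn.simps)
    also have "\<dots> = cyc k m \<otimes> (f (i - 1) \<otimes> hAn n p')"
      using Suc 4 k1 p' by (subst Suc.IH) auto
    also have "\<dots> = (cyc k m \<otimes> f (i - 1)) \<otimes> hAn n p'"
      using carr 4 k1 f_carr[of "i - 1"] by (simp add: m_assoc)
    also have "\<dots> = (f i \<otimes> cyc k m) \<otimes> hAn n p'"
      using H2'[OF k1 4 im] by simp
    also have "\<dots> = f i \<otimes> (cyc k m \<otimes> hAn n p')"
      using carr by (simp add: m_assoc)
    finally show ?thesis by (simp only: hp)
  qed
qed

lemma C_same: "C m m = id"
  by (simp add: fun_eq_iff C_def)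

lemma D_same: "D m m = id"
  by (simp add: fun_eq_iff D_def)

lemma CYC:
  assumes "q permutes {1..N}" "1 \<le> k" "k \<le> m" "m \<le> N"
  shows "hAn N (C k m \<circ> q) = cyc k m \<otimes> hAn N q"
  using assms
proof (induction "m - k" arbitrary: k)
  case 0
  then have "k = m" by simp
  then show ?case using 0 hAn_carr by (simp add: C_same cyc_same)
next
  case (Suc d)
  then have km: "k < m" by simp
  have P: "C (Suc k) m \<circ> q permutes {1..N}"
    using Suc km by (intro permutes_compose[OF Suc.prems(1)] C_permutes) auto
  have "hAn N (C k m \<circ> q) = hAn N (T k \<circ> (C (Suc k) m \<circ> q))"
    using C_T[OF km] by (simp add: comp_assoc)
  also have "\<dots> = f k \<otimes> hAn N (C (Suc k) m \<circ> q)"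
    using KEY[OF P] Suc km by simp
  also have "\<dots> = f k \<otimes> (cyc (Suc k) m \<otimes> hAn N q)"
    using Suc km by (subst Suc.hyps(1)) auto
  also have "\<dots> = cyc k m \<otimes> hAn N q"
    using Suc km hAn_carr[OF Suc.prems(1)] f_carr[of k] cyc_carr[of "Suc k" m]
    by (simp add: cyc_Suc m_assoc)
  finally show ?case .
qed

lemma hAn_id: "hAn n id = \<one>"
  by (induction n) (simp_all add: D_same cyc_same)

lemma HOMn:
  assumes "u permutes {1..n}" "n \<le> N" "q permutes {1..N}"
  shows "hAn N (u \<circ> q) = hAn n u \<otimes> hAn N q"
  using assms
proof (induction n arbitrary: u)
  case 0
  then have "u = id" by simp
  then show ?case using 0 hAn_carr by simp
next
  case (Suc n)
  define k where "k = u (Suc n)"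
  define u' where "u' = D k (Suc n) \<circ> u"
  have kr: "k \<in> {1..Suc n}" unfolding k_def using Suc permutes_in_image by fastforce
  have u': "u' permutes {1..n}" unfolding u'_def k_def by (rule step_perm[OF Suc.prems(1)])
  have seq: "u = C k (Suc n) \<circ> u'" unfolding u'_def using CD[of k "Suc n"]
    by (metis comp_assoc comp_id id_comp)
  have P: "u' \<circ> q permutes {1..N}"
    using Suc by (intro permutes_compose[OF Suc.prems(3)] permutes_subset[OF u']) auto
  have "hAn N (u \<circ> q) = hAn N (C k (Suc n) \<circ> (u' \<circ> q))"
    using seq by (metis comp_assoc)
  also have "\<dots> = cyc k (Suc n) \<otimes> hAn N (u' \<circ> q)"
    using CYC[OF P] kr Suc by simp
  also have "\<dots> = cyc k (Suc n) \<otimes> (hAn n u' \<otimes> hAn N q)"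
    using Suc u' by (subst Suc.IH) auto
  also have "\<dots> = hAn (Suc n) u \<otimes> hAn N q"
    using kr hAn_carr[OF u'] hAn_carr[OF Suc.prems(3)] cyc_carr[of k "Suc n"]
    by (simp add: m_assoc k_def u'_def)
  finally show ?case .
qed

lemma hAn_mono: "u permutes {1..n} \<Longrightarrow> n \<le> N \<Longrightarrow> hAn N u = hAn n u"
  using HOMn[of u n N id] hAn_carr[of u n] by (simp add: hAn_id)

lemma hAn_hom: "u permutes {1..N} \<Longrightarrow> q permutes {1..N} \<Longrightarrow> hAn N (u \<circ> q) = hAn N u \<otimes> hAn N q"
  using HOMn[of u N N q] by simp

lemma hAn_T: "1 \<le> i \<Longrightarrow> i < N \<Longrightarrow> hAn N (T i) = f i"
  using KEY[of id N i] f_carr[of i] by (simp add: hAn_id)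

definition hA :: "(nat \<Rightarrow> nat) \<Rightarrow> 'a" where
  "hA p = hAn (SOME n. p permutes {1..n}) p"

lemma hA_eq: assumes "p permutes {1..n}" shows "hA p = hAn n p"
proof -
  define N where "N = (SOME n. p permutes {1..n})"
  have N: "p permutes {1..N}" unfolding N_def using assms by (rule someI)
  have "hAn (max n N) p = hAn N p" using N by (intro hAn_mono) auto
  moreover have "hAn (max n N) p = hAn n p" using assms by (intro hAn_mono) auto
  ultimately show ?thesis by (simp add: hA_def N_def)
qed

end


abbreviation G0 :: "lmap set" where "G0 \<equiv> genW Xset"

lemma tb_permutes: "i \<ge> 1 \<Longrightarrow> tb i permutes {1..2*i+1}"
  unfolding tb_def by (rule permutes_swap_id) auto

lemma tb_even: "i \<ge> 1 \<Longrightarrow> even k \<Longrightarrow> tb i k = k"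
  unfolding tb_def by (auto simp: transpose_def)

lemma sref_beta_W: "i \<ge> 1 \<Longrightarrow> sref (beta i) \<in> Wset"
  using Perm_W[OF tb_permutes] by (simp add: sref_beta)

lemma Xset_W: "Xset \<subseteq> Wset"
  using sref_beta_W by (auto simp: Xset_def)

lemma genW_comp: "x \<in> genW A \<Longrightarrow> y \<in> genW A \<Longrightarrow> x \<circ> y \<in> genW A"
  unfolding genW_def using generate.eng[of x Wgrp A y] by simp

lemma genW_id: "id \<in> genW A"
  unfolding genW_def using generate.one[of Wgrp A] by simp

lemma PermT_E: "1 \<le> a \<Longrightarrow> 1 \<le> b \<Longrightarrow> k \<ge> 1 \<Longrightarrow>
   Perm (Transposition.transpose a b) (E k) = E (Transposition.transpose a b k)"
  by (subst Perm_E) (auto simp: transpose_def)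

lemma G_fix: "g \<in> G0 \<Longrightarrow> even k \<Longrightarrow> k \<ge> 2 \<Longrightarrow> g \<in> Wset \<and> g (E k) = E k"
proof (rule gen_fix[OF Xset_W])
  fix a assume "a \<in> Xset" "even k" "k \<ge> 2"
  then obtain i where i: "i \<ge> 1" "a = Perm (tb i)" by (auto simp: Xset_def sref_beta)
  have "Perm (tb i) (E k) = E (tb i k)" unfolding tb_def using i \<open>k \<ge> 2\<close> by (intro PermT_E) auto
  then show "a (E k) = E k" using i tb_even[OF i(1) \<open>even k\<close>] by simp
qed

lemma W_fix_Perm:
  assumes "q permutes {1..n}" "k \<ge> 1" "Perm q (E k) = E k"
  shows "q k = k"
proof -
  have "E (ivf q k) = E k" using assms Perm_E' by metis
  moreover have "ivf q k \<ge> 1" using pos_permutes[OF permutes_inv[OF assms(1)]] assms(2)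
    by (simp add: pos_def)
  ultimately have "ivf q k = k" using E_inj assms(2) by blast
  then show ?thesis using assms(1) by (simp add: permutes_inv_eq)
qed

definition qG :: "(nat \<Rightarrow> nat) \<Rightarrow> bool" where
  "qG q \<longleftrightarrow> (\<exists>n. q permutes {1..n} \<and> (\<forall>k. even k \<longrightarrow> q k = k))"

lemma G_perm: "g \<in> G0 \<Longrightarrow> \<exists>q. qG q \<and> g = Perm q"
proof -
  assume g: "g \<in> G0"
  have gW: "g \<in> Wset" using G_fix[OF g, of 2] by simp
  then obtain q n where q: "q permutes {1..n}" "g = Perm q" using W_Perm by blast
  have "even k \<longrightarrow> q k = k" for k
  proof (cases "k = 0")
    case True then show ?thesis using permutes_0[OF q(1)] by simp
  next
    case False
    then show ?thesis using G_fix[OF g, of k] W_fix_Perm[OF q(1), of k] q(2) by auto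
  qed
  then show ?thesis using q unfolding qG_def by blast
qed

lemma tb_eq: "odd a \<Longrightarrow> tb ((a + 1) div 2) = Transposition.transpose a (a + 2)"
proof -
  assume "odd a"
  then obtain m where "a = 2 * m + 1" using oddE by blast
  then show ?thesis by (simp add: tb_def)
qed

lemma transp_odd_G:
  assumes "odd a" "odd b" "a < b"
  shows "Perm (Transposition.transpose a b) \<in> G0"
  using assms
proof (induction "b - a" arbitrary: a rule: less_induct)
  case less
  have a1: "a \<ge> 1" using less by (cases a) auto
  have X: "Perm (Transposition.transpose a (a + 2)) \<in> G0"
  proof -
    have "(a + 1) div 2 \<ge> 1" using a1 by simp
    then have "sref (beta ((a + 1) div 2)) \<in> Xset" unfolding Xset_def by blast
    then show ?thesis using genW_incl[of Xset] sref_beta[of "(a + 1) div 2"] tb_eq[OF less(2)] a1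
      by auto
  qed
  show ?case
  proof (cases "b = a + 2")
    case True then show ?thesis using X by simp
  next
    case False
    then have ab: "a + 2 < b" using less by presburger
    have eq: "Transposition.transpose a b = Transposition.transpose a (a + 2) \<circ>
       Transposition.transpose (a + 2) b \<circ> Transposition.transpose a (a + 2)"
      using ab by (auto simp: transpose_def fun_eq_iff)
    have IH: "Perm (Transposition.transpose (a + 2) b) \<in> G0"
      using less ab by (intro less.hyps) auto
    have "Perm (Transposition.transpose a b) = Perm (Transposition.transpose a (a + 2)) \<circ>
         Perm (Transposition.transpose (a + 2) b) \<circ> Perm (Transposition.transpose a (a + 2))"
      unfolding eq using a1 ab by (simp add: Perm_o pos_transpose o_assoc)
    then show ?thesis using IH X genW_comp by simp
  qed
qed

lemma qG_G:
  assumes "q permutes {1..n}" "\<And>k. even k \<Longrightarrow> q k = k"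
  shows "Perm q \<in> G0"
proof -
  let ?S = "{k \<in> {1..n}. odd k}"
  have qS: "q permutes ?S"
    by (rule permutes_superset[OF assms(1)]) (auto simp: assms(2))
  have "finite ?S" by simp
  from qS this show ?thesis
  proof (induction rule: permutes_induct)
    case id then show ?case by (metis Perm_id genW_id)
  next
    case (swap a b p)
    have "p permutes ?S" using swap by simp
    then have pp: "p permutes {1..n}" by (rule permutes_subset) auto
    have eq: "Perm (Transposition.transpose a b \<circ> p) = Perm p \<circ> Perm (Transposition.transpose a b)"
      using swap pos_permutes[OF pp] by (simp add: Perm_o)
    have tG: "Perm (Transposition.transpose a b) \<in> G0"
    proof (cases "a < b")
      case True then show ?thesis using swap by (intro transp_odd_G) auto
    next
      case False then have "b < a" using swap by auto
      then show ?thesis using swap transp_odd_G[of b a] by (auto simp: transpose_commute)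
    qed
    show ?case unfolding eq using tG swap genW_comp by blast
  qed
qed


lemma (in group) invol_comm:
  assumes c: "a \<in> carrier G" "b \<in> carrier G" and aa: "a \<otimes> a = \<one>" and bb: "b \<otimes> b = \<one>"
    and ab: "(a \<otimes> b) \<otimes> (a \<otimes> b) = \<one>"
  shows "a \<otimes> b = b \<otimes> a"
proof -
  have ia: "inv a = a" using inv_equality[OF aa c(1) c(1)] .
  have ib: "inv b = b" using inv_equality[OF bb c(2) c(2)] .
  have "inv (a \<otimes> b) = a \<otimes> b" using inv_equality[OF ab] c by simp
  moreover have "inv (a \<otimes> b) = b \<otimes> a" using inv_mult_group[OF c] ia ib by simp
  ultimately show ?thesis by simp
qed

lemma (in group) invol_braid:
  assumes c: "a \<in> carrier G" "b \<in> carrier G" and aa: "a \<otimes> a = \<one>" and bb: "b \<otimes> b = \<one>"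
    and ab: "(a \<otimes> b) \<otimes> (a \<otimes> b) \<otimes> (a \<otimes> b) = \<one>"
  shows "a \<otimes> b \<otimes> a = b \<otimes> a \<otimes> b"
proof -
  have ia: "inv a = a" using inv_equality[OF aa c(1) c(1)] .
  have ib: "inv b = b" using inv_equality[OF bb c(2) c(2)] .
  have "inv (a \<otimes> b) = (a \<otimes> b) \<otimes> (a \<otimes> b)" using inv_equality[OF ab] c by simp
  moreover have "inv (a \<otimes> b) = b \<otimes> a" using inv_mult_group[OF c] ia ib by simp
  ultimately have e: "b \<otimes> a = a \<otimes> (b \<otimes> (a \<otimes> b))" using c by (simp add: m_assoc)
  have "b \<otimes> a \<otimes> b = a \<otimes> (b \<otimes> (a \<otimes> (b \<otimes> b)))" using c e by (simp add: m_assoc)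
  also have "\<dots> = a \<otimes> b \<otimes> a" using c bb by (simp add: m_assoc)
  finally show ?thesis by simp
qed

lemma odd_div_eq: "odd (x::nat) \<Longrightarrow> odd y \<Longrightarrow> (x + 1) div 2 = (y + 1) div 2 \<Longrightarrow> x = y"
  by (auto elim!: oddE)

lemma odd_div_back: "odd (x::nat) \<Longrightarrow> 2 * ((x + 1) div 2) - 1 = x"
  by (auto elim!: oddE)

definition rel :: "(nat \<Rightarrow> nat) \<Rightarrow> nat \<Rightarrow> nat" where
  "rel q = (\<lambda>i. if i = 0 then 0 else (q (2*i - 1) + 1) div 2)"

lemma odd_img:
  assumes "q permutes {1..n}" "\<And>k. even k \<Longrightarrow> q k = k" "odd x"
  shows "odd (q x)"
proof (rule ccontr)
  assume "\<not> odd (q x)"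
  then have "q (q x) = q x" using assms(2) by simp
  then have "q x = x" using permutes_inj[OF assms(1)] by (simp add: inj_eq)
  then show False using \<open>\<not> odd (q x)\<close> assms(3) by simp
qed

lemma qG_props:
  assumes "qG q" shows "\<exists>n. q permutes {1..n} \<and> (\<forall>k. even k \<longrightarrow> q k = k)"
  using assms unfolding qG_def by blast

lemma rel_permutes:
  assumes q: "q permutes {1..n}" and ev: "\<And>k. even k \<Longrightarrow> q k = k"
  shows "rel q permutes {1..n}"
proof (rule inj_imp_permutes)
  have oi: "odd (q (2*i - 1))" if "i \<ge> 1" for i
    using odd_img[OF q ev] that by (simp add: odd_pos)
  show "inj_on (rel q) {1..n}"
  proof (rule inj_onI)
    fix i j assume ij: "i \<in> {1..n}" "j \<in> {1..n}" "rel q i = rel q j"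
    then have "(q (2*i - 1) + 1) div 2 = (q (2*j - 1) + 1) div 2" by (auto simp: rel_def)
    moreover have "odd (q (2*i - 1))" "odd (q (2*j - 1))" using ij oi by auto
    ultimately have "q (2*i - 1) = q (2*j - 1)" by (rule odd_div_eq[rotated 2])
    then have "2*i - 1 = 2*j - 1" using permutes_inj[OF q] by (simp add: inj_eq)
    then show "i = j" using ij by auto
  qed
  show "rel q i \<in> {1..n}" if i: "i \<in> {1..n}" for i
  proof (cases "2*i - 1 \<in> {1..n}")
    case True
    then have "q (2*i - 1) \<in> {1..n}" using permutes_in_image[OF q] by simp
    then show ?thesis using i by (auto simp: rel_def)
  next
    case False
    then have "q (2*i - 1) = 2*i - 1" using permutes_not_in[OF q] by simp
    then show ?thesis using i by (auto simp: rel_def)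
  qed
  show "rel q i = i" if i: "i \<notin> {1..n}" for i
  proof (cases "i = 0")
    case False
    then have "2*i - 1 \<notin> {1..n}" using i by auto
    then have "q (2*i - 1) = 2*i - 1" using permutes_not_in[OF q] by simp
    then show ?thesis using False by (simp add: rel_def)
  qed (simp add: rel_def)
qed simp

lemma rel_comp:
  assumes q2: "q2 permutes {1..n}" and ev: "\<And>k. even k \<Longrightarrow> q2 k = k"
  shows "rel (q1 \<circ> q2) = rel q1 \<circ> rel q2"
proof (rule ext)
  fix i
  show "rel (q1 \<circ> q2) i = (rel q1 \<circ> rel q2) i"
  proof (cases "i = 0")
    case False
    have o: "odd (q2 (2*i - 1))" using odd_img[OF q2 ev] False by simp
    then have "2 * ((q2 (2*i - 1) + 1) div 2) - 1 = q2 (2*i - 1)" by (rule odd_div_back)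
    moreover have "(q2 (2*i - 1) + 1) div 2 \<noteq> 0" using o by (auto elim: oddE)
    ultimately show ?thesis using False by (simp add: rel_def)
  qed (simp add: rel_def)
qed

lemma rel_tb: "i \<ge> 1 \<Longrightarrow> rel (tb i) = T i"
proof (rule ext)
  fix j assume i: "i \<ge> 1"
  show "rel (tb i) j = T i j"
  proof (cases "j = 0")
    case True then show ?thesis using i by (simp add: rel_def T_def)
  next
    case False
    consider "j = i" | "j = Suc i" | "j \<noteq> i \<and> j \<noteq> Suc i" by blast
    then show ?thesis
    proof cases
      case 1 then show ?thesis using i by (simp add: rel_def T_def tb_def)
    next
      case 2 then show ?thesis using i by (simp add: rel_def T_def tb_def)
    next
      case 3
      then have "2*j - 1 \<noteq> 2*i - 1" "2*j - 1 \<noteq> 2*i + 1" using i False by auto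
      then show ?thesis using 3 False by (simp add: rel_def T_def tb_def)
    qed
  qed
qed

lemma qG_0: "qG q \<Longrightarrow> q 0 = 0"
  unfolding qG_def by auto

lemma the_q: "qG q \<Longrightarrow> (THE q'. qG q' \<and> Perm q = Perm q') = q"
proof (rule the_equality)
  fix q' assume "qG q" "qG q' \<and> Perm q = Perm q'"
  then show "q' = q" using Perm_inj[of q' q] qG_0 by auto
qed auto

lemma qG_comp: "qG q1 \<Longrightarrow> qG q2 \<Longrightarrow> qG (q1 \<circ> q2)"
proof -
  assume "qG q1" "qG q2"
  then obtain n1 n2 where "q1 permutes {1..n1}" "q2 permutes {1..n2}"
    "\<forall>k. even k \<longrightarrow> q1 k = k" "\<forall>k. even k \<longrightarrow> q2 k = k" unfolding qG_def by blast
  moreover have "q1 permutes {1..max n1 n2}"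
    using calculation(1) by (rule permutes_subset) auto
  moreover have "q2 permutes {1..max n1 n2}"
    using calculation(2) by (rule permutes_subset) auto
  ultimately show ?thesis unfolding qG_def by (intro exI[of _ "max n1 n2"]) (auto intro: permutes_compose)
qed

lemma qG_tb: "i \<ge> 1 \<Longrightarrow> qG (tb i)"
  unfolding qG_def using tb_permutes tb_even by blast

lemma qG_pos: "qG q \<Longrightarrow> pos q"
  unfolding qG_def using pos_permutes by blast


abbreviation GG :: "lmap monoid" where "GG \<equiv> Wgrp\<lparr>carrier := G0\<rparr>"

lemma group_GG: "group GG"
  using group.subgroup_imp_group[OF group_W genW_subgroup[OF Xset_W]] .

lemma GG_simps[simp]: "carrier GG = G0" "x \<otimes>\<^bsub>GG\<^esub> y = x \<circ> y" "\<one>\<^bsub>GG\<^esub> = id"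
  by (simp_all add: Wgrp_def)

lemma pos_comp: "pos a \<Longrightarrow> pos b \<Longrightarrow> pos (a \<circ> b)"
  by (simp add: pos_def)

lemma pos_funpow: "pos q \<Longrightarrow> pos (q ^^ n)"
  by (induction n) (auto simp: pos_def)

lemma Perm_pow_GG: "pos q \<Longrightarrow> Perm q [^]\<^bsub>GG\<^esub> n = Perm (q ^^ n)"
proof (induction n)
  case 0 show ?case by (simp only: nat_pow_0 GG_simps funpow.simps(1) Perm_id)
next
  case (Suc n)
  have "Perm q [^]\<^bsub>GG\<^esub> Suc n = Perm (q ^^ n) \<circ> Perm q" using Suc by simp
  also have "\<dots> = Perm (q \<circ> q ^^ n)" using Perm_o[OF pos_funpow[OF Suc.prems], of q n] by simp
  finally show ?case by (simp only: funpow.simps(2))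
qed

lemma Perm_eq_id: "q 0 = 0 \<Longrightarrow> Perm q = id \<longleftrightarrow> q = id"
  using Perm_inj[of q id] Perm_id by auto

lemma tb_0: "i \<ge> 1 \<Longrightarrow> tb i 0 = 0"
  by (simp add: tb_def transpose_def)

lemma tb_tb: "i \<ge> 1 \<Longrightarrow> tb i \<circ> tb i = id"
  by (simp add: tb_def)

lemma tb_ne: "i \<ge> 1 \<Longrightarrow> j \<ge> 1 \<Longrightarrow> i \<noteq> j \<Longrightarrow> tb j \<circ> tb i \<noteq> id"
proof
  assume ij: "i \<ge> 1" "j \<ge> 1" "i \<noteq> j" and e: "tb j \<circ> tb i = id"
  have "tb i (2*i - 1) = 2*i + 1" by (simp add: tb_def)
  moreover have "tb j (2*i + 1) \<noteq> 2*i - 1" using ij by (auto simp: tb_def transpose_def)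
  ultimately show False using fun_cong[OF e, of "2*i - 1"] by simp
qed

lemma cube1: "(Transposition.transpose (a+2) (a+4) \<circ> Transposition.transpose a (a+2)) ^^ 3 = id"
  for a :: nat
proof (rule ext)
  fix x
  consider "x = a" | "x = a + 2" | "x = a + 4" | "x \<noteq> a \<and> x \<noteq> a + 2 \<and> x \<noteq> a + 4" by blast
  then show "((Transposition.transpose (a+2) (a+4) \<circ> Transposition.transpose a (a+2)) ^^ 3) x = id x"
    by cases (simp_all add: numeral_3_eq_3 transpose_def)
qed

lemma cube2: "(Transposition.transpose a (a+2) \<circ> Transposition.transpose (a+2) (a+4)) ^^ 3 = id"
  for a :: nat
proof (rule ext)
  fix x
  consider "x = a" | "x = a + 2" | "x = a + 4" | "x \<noteq> a \<and> x \<noteq> a + 2 \<and> x \<noteq> a + 4" by blast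
  then show "((Transposition.transpose a (a+2) \<circ> Transposition.transpose (a+2) (a+4)) ^^ 3) x = id x"
    by cases (simp_all add: numeral_3_eq_3 transpose_def)
qed

lemma sq1: "a + 2 < b \<or> b + 2 < a \<Longrightarrow>
  (Transposition.transpose b (b+2) \<circ> Transposition.transpose a (a+2)) ^^ 2 = id"
  for a b :: nat
proof (rule ext)
  fix x assume ab: "a + 2 < b \<or> b + 2 < a"
  consider "x = a" | "x = a + 2" | "x = b" | "x = b + 2" | "x \<noteq> a \<and> x \<noteq> a + 2 \<and> x \<noteq> b \<and> x \<noteq> b + 2" by blast
  then show "((Transposition.transpose b (b+2) \<circ> Transposition.transpose a (a+2)) ^^ 2) x = id x"
    using ab by cases (auto simp: numeral_2_eq_2 transpose_def)
qed

lemma tb_alt: "i \<ge> 1 \<Longrightarrow> tb i = Transposition.transpose (2*i - 1) (2*i - 1 + 2)"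
  by (simp add: tb_def)

lemma tb_cube: "i \<ge> 1 \<Longrightarrow> (j = Suc i \<or> i = Suc j) \<Longrightarrow> j \<ge> 1 \<Longrightarrow> (tb j \<circ> tb i) ^^ 3 = id"
proof -
  assume i: "i \<ge> 1" and ji: "j = Suc i \<or> i = Suc j" and j: "j \<ge> 1"
  show ?thesis using ji
  proof
    assume "j = Suc i"
    define a where "a = 2*i - 1"
    have "2*i + 1 = a+2" using i unfolding a_def by arith
    then have e1: "tb i = Transposition.transpose a (a+2)" unfolding tb_def a_def by (simp only:)
    have "2*j - 1 = a+2" "2*j + 1 = a+4" using i \<open>j = Suc i\<close> unfolding a_def by arith+
    then have e2: "tb j = Transposition.transpose (a+2) (a+4)"
      unfolding tb_def by (simp only:)
    show ?thesis unfolding e1 e2 by (rule cube1)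
  next
    assume "i = Suc j"
    define a where "a = 2*j - 1"
    have "2*j + 1 = a+2" using j unfolding a_def by arith
    then have e1: "tb j = Transposition.transpose a (a+2)" unfolding tb_def a_def by (simp only:)
    have "2*i - 1 = a+2" "2*i + 1 = a+4" using j \<open>i = Suc j\<close> unfolding a_def by arith+
    then have e2: "tb i = Transposition.transpose (a+2) (a+4)"
      unfolding tb_def by (simp only:)
    show ?thesis unfolding e1 e2 by (rule cube2)
  qed
qed

lemma tb_sq: "i \<ge> 1 \<Longrightarrow> j \<ge> 1 \<Longrightarrow> (Suc i < j \<or> Suc j < i) \<Longrightarrow> (tb j \<circ> tb i) ^^ 2 = id"
proof -
  assume i: "i \<ge> 1" and j: "j \<ge> 1" and ij: "Suc i < j \<or> Suc j < i"
  define a where "a = 2*i - 1"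
  define b where "b = 2*j - 1"
  have "2*i + 1 = a+2" using i unfolding a_def by arith
  then have e1: "tb i = Transposition.transpose a (a+2)" unfolding tb_def a_def by (simp only:)
  have "2*j + 1 = b+2" using j unfolding b_def by arith
  then have e2: "tb j = Transposition.transpose b (b+2)" unfolding tb_def b_def by (simp only:)
  have "a + 2 < b \<or> b + 2 < a" using ij i j unfolding a_def b_def by arith
  then show ?thesis unfolding e1 e2 by (rule sq1)
qed

lemma (in group) ord_2:
  assumes "x \<in> carrier G" "x \<noteq> \<one>" "x [^] (2::nat) = \<one>" shows "ord x = 2"
proof -
  have d: "ord x dvd 2" using pow_eq_id[OF assms(1)] assms(3) by simp
  have "ord x \<noteq> 0" proof assume "ord x = 0" then show False using d by simp qed
  moreover from d have "ord x \<le> 2" by (auto dest: dvd_imp_le)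
  moreover have "ord x \<noteq> 1" using ord_eq_1[OF assms(1)] assms(2) by simp
  ultimately show ?thesis by linarith
qed

lemma (in group) ord_3:
  assumes "x \<in> carrier G" "x \<noteq> \<one>" "x [^] (3::nat) = \<one>" shows "ord x = 3"
proof -
  have d: "ord x dvd 3" using pow_eq_id[OF assms(1)] assms(3) by simp
  have "ord x \<noteq> 0" proof assume "ord x = 0" then show False using d by simp qed
  moreover from d have "ord x \<le> 3" by (auto dest: dvd_imp_le)
  moreover from d have "ord x \<noteq> 2" by auto
  moreover have "ord x \<noteq> 1" using ord_eq_1[OF assms(1)] assms(2) by simp
  ultimately show ?thesis by linarith
qed

lemma pos_tb: "i \<ge> 1 \<Longrightarrow> pos (tb i)"
  unfolding tb_def by (rule pos_transpose) auto

lemma e_in: "i \<ge> 1 \<Longrightarrow> sref (beta i) \<in> Xset"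
  unfolding Xset_def by blast

lemma e_G: "i \<ge> 1 \<Longrightarrow> sref (beta i) \<in> G0"
  using e_in genW_incl by blast

lemma e_mult: "i \<ge> 1 \<Longrightarrow> j \<ge> 1 \<Longrightarrow> sref (beta i) \<otimes>\<^bsub>GG\<^esub> sref (beta j) = Perm (tb j \<circ> tb i)"
  using Perm_o[OF pos_tb, of i "tb j"] by (simp add: sref_beta)

lemma tb_comp_0: "i \<ge> 1 \<Longrightarrow> j \<ge> 1 \<Longrightarrow> (tb j \<circ> tb i) 0 = 0"
  by (simp add: tb_0)

lemma GG_pow: "i \<ge> 1 \<Longrightarrow> j \<ge> 1 \<Longrightarrow>
  (sref (beta i) \<otimes>\<^bsub>GG\<^esub> sref (beta j)) [^]\<^bsub>GG\<^esub> n = Perm ((tb j \<circ> tb i) ^^ n)"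
proof -
  assume ij: "i \<ge> 1" "j \<ge> 1"
  have "sref (beta i) \<otimes>\<^bsub>GG\<^esub> sref (beta j) = Perm (tb j \<circ> tb i)" by (rule e_mult[OF ij])
  then show ?thesis using Perm_pow_GG[OF pos_comp[OF pos_tb pos_tb], of j i n] ij by (simp only:)
qed

lemma ord_e: assumes "i \<ge> 1" "j \<ge> 1"
  shows "group.ord GG (sref (beta i) \<otimes>\<^bsub>GG\<^esub> sref (beta j)) = mA i j"
proof -
  interpret GGg: group GG by (rule group_GG)
  let ?x = "sref (beta i) \<otimes>\<^bsub>GG\<^esub> sref (beta j)"
  have xc: "?x \<in> carrier GG" using e_G assms genW_comp by simp
  have xne: "?x \<noteq> \<one>\<^bsub>GG\<^esub>" if "i \<noteq> j"
    using e_mult[OF assms] Perm_eq_id[of "tb j \<circ> tb i", OF tb_comp_0[OF assms]] tb_ne[OF assms that] by simp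
  consider "i = j" | "j = Suc i \<or> i = Suc j" | "Suc i < j \<or> Suc j < i" by linarith
  then show ?thesis
  proof cases
    case 1
    then have "?x = \<one>\<^bsub>GG\<^esub>" using e_mult[OF assms] tb_tb[OF assms(1)] by (simp add: Perm_id)
    then have "GGg.ord ?x = 1" using GGg.ord_id by simp
    then show ?thesis using 1 by (simp add: mA_def)
  next
    case 2
    then have "i \<noteq> j" by auto
    have "?x [^]\<^bsub>GG\<^esub> (3::nat) = \<one>\<^bsub>GG\<^esub>"
      using GG_pow[OF assms, of 3] tb_cube[OF assms(1) 2 assms(2)] by (simp add: Perm_id)
    then have "GGg.ord ?x = 3" using GGg.ord_3[OF xc xne[OF \<open>i \<noteq> j\<close>]] by simp
    then show ?thesis using 2 by (auto simp: mA_def)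
  next
    case 3
    then have "i \<noteq> j" by auto
    have "?x [^]\<^bsub>GG\<^esub> (2::nat) = \<one>\<^bsub>GG\<^esub>"
      using GG_pow[OF assms, of 2] tb_sq[OF assms 3] by (simp add: Perm_id)
    then have "GGg.ord ?x = 2" using GGg.ord_2[OF xc xne[OF \<open>i \<noteq> j\<close>]] by simp
    then show ?thesis using 3 by (auto simp: mA_def)
  qed
qed

lemma rel_qG_permutes: "qG q \<Longrightarrow> \<exists>n. q permutes {1..n} \<and> rel q permutes {1..n} \<and> (\<forall>k. even k \<longrightarrow> q k = k)"
  unfolding qG_def using rel_permutes by blast

lemma T_perm': "i \<ge> 1 \<Longrightarrow> T i permutes {1..Suc i}"
  by (rule T_permutes) auto

lemma univ_prop:
  fixes H :: "'h monoid" and \<phi> :: "lmap \<Rightarrow> 'h"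
  assumes H: "group H" and \<phi>: "\<phi> \<in> Xset \<rightarrow> carrier H"
    and R: "\<forall>s\<in>Xset. \<forall>t\<in>Xset. \<forall>n::nat. (s \<otimes>\<^bsub>GG\<^esub> t) [^]\<^bsub>GG\<^esub> n = \<one>\<^bsub>GG\<^esub> \<longrightarrow>
            (\<phi> s \<otimes>\<^bsub>H\<^esub> \<phi> t) [^]\<^bsub>H\<^esub> n = \<one>\<^bsub>H\<^esub>"
  shows "\<exists>h \<in> hom GG H. \<forall>s\<in>Xset. h s = \<phi> s"
proof -
  interpret Hg: group H by (rule H)
  define f where "f i = \<phi> (sref (beta i))" for i
  have fc: "f i \<in> carrier H" if "i \<ge> 1" for i
    using \<phi> e_in[OF that] by (auto simp: f_def)
  have rH: "(f i \<otimes>\<^bsub>H\<^esub> f j) [^]\<^bsub>H\<^esub> n = \<one>\<^bsub>H\<^esub>"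
    if "i \<ge> 1" "j \<ge> 1" "(tb j \<circ> tb i) ^^ n = id" for i j n
  proof -
    have "(sref (beta i) \<otimes>\<^bsub>GG\<^esub> sref (beta j)) [^]\<^bsub>GG\<^esub> n = \<one>\<^bsub>GG\<^esub>"
      using GG_pow[OF that(1,2), of n] that(3) by (simp add: Perm_id)
    then show ?thesis using R e_in[OF that(1)] e_in[OF that(2)] by (auto simp: f_def)
  qed
  have finv: "f i \<otimes>\<^bsub>H\<^esub> f i = \<one>\<^bsub>H\<^esub>" if "i \<ge> 1" for i
  proof -
    have "(tb i \<circ> tb i) ^^ 1 = id" using tb_tb[OF that] by simp
    from rH[OF that that this] show ?thesis using fc[OF that] by simp
  qed
  interpret C: coxrel H f
  proof unfold_locales
    fix i :: nat assume i: "1 \<le> i"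
    show "f i \<in> carrier H" by (rule fc[OF i])
    show "f i \<otimes>\<^bsub>H\<^esub> f i = \<one>\<^bsub>H\<^esub>" by (rule finv[OF i])
    have i1: "Suc i \<ge> 1" by simp
    have "(f i \<otimes>\<^bsub>H\<^esub> f (Suc i)) [^]\<^bsub>H\<^esub> (3::nat) = \<one>\<^bsub>H\<^esub>"
      using rH[OF i i1 tb_cube[OF i _ i1]] by simp
    then have "(f i \<otimes>\<^bsub>H\<^esub> f (Suc i)) \<otimes>\<^bsub>H\<^esub> (f i \<otimes>\<^bsub>H\<^esub> f (Suc i)) \<otimes>\<^bsub>H\<^esub> (f i \<otimes>\<^bsub>H\<^esub> f (Suc i)) = \<one>\<^bsub>H\<^esub>"
      using fc[OF i] fc[OF i1] by (simp add: numeral_3_eq_3)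
    then show "f i \<otimes>\<^bsub>H\<^esub> f (Suc i) \<otimes>\<^bsub>H\<^esub> f i = f (Suc i) \<otimes>\<^bsub>H\<^esub> f i \<otimes>\<^bsub>H\<^esub> f (Suc i)"
      using Hg.invol_braid[OF fc[OF i] fc[OF i1] finv[OF i] finv[OF i1]] by simp
  next
    fix i j :: nat assume i: "1 \<le> i" and ij: "Suc i < j"
    have j: "j \<ge> 1" using ij by simp
    have "(f i \<otimes>\<^bsub>H\<^esub> f j) [^]\<^bsub>H\<^esub> (2::nat) = \<one>\<^bsub>H\<^esub>"
      using rH[OF i j tb_sq[OF i j]] ij by simp
    then have "(f i \<otimes>\<^bsub>H\<^esub> f j) \<otimes>\<^bsub>H\<^esub> (f i \<otimes>\<^bsub>H\<^esub> f j) = \<one>\<^bsub>H\<^esub>"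
      using fc[OF i] fc[OF j] by (simp add: numeral_2_eq_2)
    then show "f i \<otimes>\<^bsub>H\<^esub> f j = f j \<otimes>\<^bsub>H\<^esub> f i"
      using Hg.invol_comm[OF fc[OF i] fc[OF j] finv[OF i] finv[OF j]] by simp
  qed
  define h where "h g = inv\<^bsub>H\<^esub> (C.hA (rel (THE q. qG q \<and> g = Perm q)))" for g
  have hq: "h (Perm q) = inv\<^bsub>H\<^esub> (C.hA (rel q))" if "qG q" for q
    using the_q[OF that] by (simp add: h_def)
  have hAc: "C.hA (rel q) \<in> carrier H" if qq: "qG q" for q
  proof -
    obtain n where "rel q permutes {1..n}" using rel_qG_permutes[OF qq] by blast
    then show ?thesis using C.hA_eq C.hAn_carr by simp
  qed
  have hAm: "C.hA (rel (q2 \<circ> q1)) = C.hA (rel q2) \<otimes>\<^bsub>H\<^esub> C.hA (rel q1)" if qq: "qG q1" "qG q2" for q1 q2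
  proof -
    obtain n1 where n1: "q1 permutes {1..n1}" "rel q1 permutes {1..n1}" "\<forall>k. even k \<longrightarrow> q1 k = k"
      using rel_qG_permutes[OF qq(1)] by blast
    obtain n2 where n2: "rel q2 permutes {1..n2}"
      using rel_qG_permutes[OF qq(2)] by blast
    define N where "N = max n1 n2"
    have p1: "rel q1 permutes {1..N}" using n1(2) by (rule permutes_subset) (auto simp: N_def)
    have p2: "rel q2 permutes {1..N}" using n2 by (rule permutes_subset) (auto simp: N_def)
    have "rel (q2 \<circ> q1) = rel q2 \<circ> rel q1" using n1 by (intro rel_comp) auto
    then show ?thesis using C.hA_eq p1 p2 permutes_compose[OF p1 p2] C.hAn_hom[OF p2 p1] by simp
  qed
  have "h \<in> hom GG H"
  proof (rule homI)
    fix x assume "x \<in> carrier GG"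
    then obtain q where q: "qG q" "x = Perm q" using G_perm by auto
    then show "h x \<in> carrier H" using hq hAc by simp
  next
    fix x y assume xy: "x \<in> carrier GG" "y \<in> carrier GG"
    obtain q1 where q1: "qG q1" "x = Perm q1" using G_perm xy(1) by auto
    obtain q2 where q2: "qG q2" "y = Perm q2" using G_perm xy(2) by auto
    note q = q1 q2
    have xy: "x \<otimes>\<^bsub>GG\<^esub> y = Perm (q2 \<circ> q1)" using q Perm_o[OF qG_pos[OF q(1)], of q2] by simp
    have "h (x \<otimes>\<^bsub>GG\<^esub> y) = inv\<^bsub>H\<^esub> (C.hA (rel q2) \<otimes>\<^bsub>H\<^esub> C.hA (rel q1))"
      unfolding xy using hq[OF qG_comp[OF q(3) q(1)]] hAm[OF q(1) q(3)] by simp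
    also have "\<dots> = inv\<^bsub>H\<^esub> (C.hA (rel q1)) \<otimes>\<^bsub>H\<^esub> inv\<^bsub>H\<^esub> (C.hA (rel q2))"
      using Hg.inv_mult_group hAc q by simp
    finally show "h (x \<otimes>\<^bsub>GG\<^esub> y) = h x \<otimes>\<^bsub>H\<^esub> h y" using hq q by simp
  qed
  moreover have "\<forall>s\<in>Xset. h s = \<phi> s"
  proof
    fix s assume "s \<in> Xset"
    then obtain i where i: "i \<ge> 1" "s = sref (beta i)" by (auto simp: Xset_def)
    have "h s = inv\<^bsub>H\<^esub> (C.hA (T i))" using hq[OF qG_tb[OF i(1)]] rel_tb[OF i(1)] i sref_beta by simp
    also have "\<dots> = inv\<^bsub>H\<^esub> (f i)" using C.hA_eq[OF T_perm'[OF i(1)]] C.hAn_T[of i "Suc i"] i by simp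
    also have "\<dots> = f i" using Hg.inv_equality[OF finv[OF i(1)] fc[OF i(1)] fc[OF i(1)]] .
    finally show "h s = \<phi> s" using i by (simp add: f_def)
  qed
  ultimately show ?thesis by blast
qed

lemma tb_ne_id: "i \<ge> 1 \<Longrightarrow> tb i \<noteq> id"
proof
  assume "i \<ge> 1" "tb i = id"
  then have "tb i (2*i - 1) = 2*i - 1" by simp
  moreover have "tb i (2*i - 1) = 2*i + 1" by (simp add: tb_def)
  ultimately show False by simp
qed

lemma cox_A: "coxeter_system_A_inf TYPE('h) GG Xset"
proof -
  have XG: "Xset \<subseteq> G0" by (rule genW_incl)
  have gen: "generate GG Xset = G0"
    using group.generate_consistent[OF group_W XG genW_subgroup[OF Xset_W]] by (simp add: genW_def)
  have sX: "s \<noteq> id \<and> s \<circ> s = id" if sx: "s \<in> Xset" for s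
  proof -
    obtain i where i0: "i \<ge> 1" "s = sref (beta i)" using sx by (auto simp: Xset_def)
    then have i: "i \<ge> 1" "s = Perm (tb i)" by (auto simp: sref_beta)
    have "Perm (tb i) \<noteq> id" using Perm_eq_id[of "tb i", OF tb_0[OF i(1)]] tb_ne_id[OF i(1)] by simp
    moreover have "Perm (tb i) \<circ> Perm (tb i) = id" using i(1) by (simp add: tb_def Perm_transp_invol)
    ultimately show ?thesis using i by simp
  qed
  have bij: "bij_betw (\<lambda>i. sref (beta i)) {1..} Xset"
  proof (rule bij_betwI')
    fix i j :: nat assume ij: "i \<in> {1..}" "j \<in> {1..}"
    show "(sref (beta i) = sref (beta j)) = (i = j)"
    proof
      assume e: "sref (beta i) = sref (beta j)"
      show "i = j"
      proof (rule ccontr)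
        assume "i \<noteq> j"
        have "tb i = tb j" using e ij Perm_inj[of "tb i" "tb j"] tb_0 by (simp add: sref_beta)
        then show False using tb_ne[of i j] tb_tb[of i] ij \<open>i \<noteq> j\<close> by simp
      qed
    qed simp
  next
    fix i :: nat assume "i \<in> {1..}" then show "sref (beta i) \<in> Xset" by (simp add: e_in)
  next
    fix s assume "s \<in> Xset" then show "\<exists>i\<in>{1..}. s = sref (beta i)" by (auto simp: Xset_def)
  qed
  have ord: "\<forall>i\<ge>1. \<forall>j\<ge>1. group.ord GG (sref (beta i) \<otimes>\<^bsub>GG\<^esub> sref (beta j)) = mA i j"
    using ord_e by blast
  show ?thesis
    unfolding coxeter_system_A_inf_def coxeter_system_def
    using group_GG XG gen sX bij ord univ_prop
    by (intro conjI exI[of _ "\<lambda>i. sref (beta i)"]) auto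
qed


lemma r_nonneg: "a < c \<Longrightarrow> r a c k \<ge> 0"
  by (simp add: r_def E_def)

lemma r_at: "r a c k = (if a \<le> k \<and> \<not> c \<le> k then 1 else if c \<le> k \<and> \<not> a \<le> k then -1 else 0)"
  by (simp add: r_def E_def)

lemma Phi_r: "\<gamma> \<in> Phi \<Longrightarrow> \<exists>a c. a \<ge> 1 \<and> c \<ge> 1 \<and> a \<noteq> c \<and> \<gamma> = r a c"
proof -
  assume "\<gamma> \<in> Phi"
  then obtain w i where wi: "w \<in> Wset" "i \<ge> 1" "\<gamma> = w (alpha i)" by (auto simp: Phi_def)
  then obtain p n where p: "p permutes {1..n}" "w = Perm p" using W_Perm by blast
  have ip: "ivf p permutes {1..n}" using permutes_inv[OF p(1)] .
  have "\<gamma> = r (ivf p i) (ivf p (Suc i))"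
    using wi p Perm_r[OF permutes_bij[OF p(1)] permutes_0[OF p(1)], of i "Suc i"] by (simp add: alpha_r)
  moreover have "ivf p i \<ge> 1" "ivf p (Suc i) \<ge> 1" using pos_permutes[OF ip] wi by (auto simp: pos_def)
  moreover have "ivf p i \<noteq> ivf p (Suc i)"
    using permutes_inj[OF ip] by (simp add: inj_eq)
  ultimately show ?thesis by blast
qed

lemma Phi_pos_r: "\<gamma> \<in> Phi_pos \<Longrightarrow> \<exists>a c. 1 \<le> a \<and> a < c \<and> \<gamma> = r a c"
proof -
  assume g: "\<gamma> \<in> Phi_pos"
  then have "\<gamma> \<in> Phi" by (simp add: Phi_pos_def)
  then obtain a c where ac: "a \<ge> 1" "c \<ge> 1" "a \<noteq> c" "\<gamma> = r a c" using Phi_r by blast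
  have "\<not> c < a"
  proof
    assume "c < a"
    then have "\<gamma> c < 0" using ac by (simp add: r_def E_def)
    then show False using g by (auto simp: Phi_pos_def) (metis not_le)
  qed
  then show ?thesis using ac by (intro exI[of _ a] exI[of _ c]) auto
qed

lemma r_Phi_pos: assumes "1 \<le> a" "a < c" shows "r a c \<in> Phi_pos"
proof -
  have "r a c \<in> Phi"
  proof (cases "c = Suc a")
    case True
    then have "r a c = id (alpha a)" using assms by (simp add: alpha_r)
    then show ?thesis using assms Wset.Wid unfolding Phi_def by blast
  next
    case False
    then have ac: "Suc a < c" using assms by simp
    define t where "t = Transposition.transpose (Suc a) c"
    have tW: "Perm t \<in> Wset" unfolding t_def using ac by (intro Perm_transp_W) auto
    have "Perm t (alpha a) = r (ivf t a) (ivf t (Suc a))"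
      using assms by (simp add: alpha_r t_def Perm_r transpose_def)
    also have "\<dots> = r a c" using ac by (simp add: t_def)
    finally have eq: "r a c = Perm t (alpha a)" by simp
    show ?thesis unfolding Phi_def using tW assms(1) eq by blast
  qed
  then show ?thesis using r_nonneg assms by (simp add: Phi_pos_def)
qed

lemma sref_r_G_odd:
  assumes "1 \<le> a" "a < c" "sref (r a c) \<in> G0"
  shows "odd a \<and> odd c"
proof -
  have P: "sref (r a c) = Perm (Transposition.transpose a c)" using sref_r assms by simp
  have "odd a"
  proof (rule ccontr)
    assume "\<not> odd a"
    then have "a \<ge> 2" using assms by presburger
    then have "sref (r a c) (E a) = E a" using G_fix[OF assms(3)] \<open>\<not> odd a\<close> by simp
    moreover have "sref (r a c) (E a) = E c" using P assms by (simp add: PermT_E)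
    ultimately show False using E_inj[of c a] assms by simp
  qed
  moreover have "odd c"
  proof (rule ccontr)
    assume "\<not> odd c"
    then have "c \<ge> 2" using assms by presburger
    then have "sref (r a c) (E c) = E c" using G_fix[OF assms(3)] \<open>\<not> odd c\<close> by simp
    moreover have "sref (r a c) (E c) = E a" using P assms by (simp add: PermT_E)
    ultimately show False using E_inj[of c a] assms by simp
  qed
  ultimately show ?thesis by simp
qed

lemma beta_Phi_pos: "i \<ge> 1 \<Longrightarrow> beta i \<in> Phi_pos"
  using r_Phi_pos[of "2*i - 1" "2*i + 1"] by (simp add: beta_r)

lemma Pi_sub: "Pi_of G0 \<subseteq> {beta i | i. i \<ge> 1}"
proof
  fix \<gamma> assume g: "\<gamma> \<in> Pi_of G0"
  then have gp: "\<gamma> \<in> Phi_pos" "sref \<gamma> \<in> G0" by (auto simp: Pi_of_def)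
  then obtain a c where ac: "1 \<le> a" "a < c" "\<gamma> = r a c" using Phi_pos_r by blast
  then have oac: "odd a" "odd c" using sref_r_G_odd gp by auto
  show "\<gamma> \<in> {beta i | i. i \<ge> 1}"
  proof (cases "c = a + 2")
    case True
    define i where "i = (a + 1) div 2"
    have "2*i - 1 = a" using odd_div_back[OF oac(1)] by (simp add: i_def)
    moreover have "i \<ge> 1" using ac by (simp add: i_def)
    moreover have "c = 2*i + 1" using True \<open>2*i - 1 = a\<close> \<open>i \<ge> 1\<close> by arith
    ultimately have "\<gamma> = beta i" using ac by (simp add: beta_r)
    then show ?thesis using \<open>i \<ge> 1\<close> by blast
  next
    case False
    then have c4: "a + 2 < c" using ac oac by presburger
    define F where "F = {r a (a+2), r (a+2) c}"
    have ne: "r a (a+2) \<noteq> r (a+2) c"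
    proof
      assume "r a (a+2) = r (a+2) c"
      then have "r a (a+2) a = r (a+2) c a" by simp
      then show False using c4 by (simp add: r_def E_def)
    qed
    have F1: "r a (a+2) \<in> {\<beta> \<in> Phi_pos. sref \<beta> \<in> G0 \<and> \<beta> \<noteq> \<gamma>}"
    proof -
      have "r a (a+2) \<noteq> r a c"
      proof
        assume "r a (a+2) = r a c"
        then have "r a (a+2) (a+2) = r a c (a+2)" by simp
        then show False using c4 by (simp add: r_def E_def)
      qed
      moreover have "sref (r a (a+2)) \<in> G0" using ac oac by (simp add: sref_r transp_odd_G)
      ultimately show ?thesis using ac r_Phi_pos[of a "a+2"] by simp
    qed
    have F2: "r (a+2) c \<in> {\<beta> \<in> Phi_pos. sref \<beta> \<in> G0 \<and> \<beta> \<noteq> \<gamma>}"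
    proof -
      have "r (a+2) c \<noteq> r a c"
      proof
        assume "r (a+2) c = r a c"
        then have "r (a+2) c a = r a c a" by simp
        then show False using c4 by (simp add: r_def E_def)
      qed
      moreover have "sref (r (a+2) c) \<in> G0" using c4 oac by (simp add: sref_r transp_odd_G)
      ultimately show ?thesis using ac c4 r_Phi_pos[of "a+2" c] by simp
    qed
    have sum: "\<forall>k. \<gamma> k = (\<Sum>\<beta>\<in>F. (\<lambda>_. 1::real) \<beta> * \<beta> k)"
      using ne ac by (simp add: F_def r_def)
    have "\<exists>F c. finite F \<and> F \<noteq> {} \<and> F \<subseteq> {\<beta> \<in> Phi_pos. sref \<beta> \<in> G0 \<and> \<beta> \<noteq> \<gamma>} \<and>
             (\<forall>\<beta>\<in>F. c \<beta> > (0::real)) \<and> (\<forall>k. \<gamma> k = (\<Sum>\<beta>\<in>F. c \<beta> * \<beta> k))"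
      using F1 F2 sum by (intro exI[of _ F] exI[of _ "\<lambda>_. 1::real"]) (auto simp: F_def)
    then show ?thesis using g unfolding Pi_of_def by blast
  qed
qed

lemma beta_in_Pi: assumes i: "i \<ge> 1" shows "beta i \<in> Pi_of G0"
proof -
  have nc: "\<not> (\<exists>F c. finite F \<and> F \<noteq> {} \<and>
             F \<subseteq> {\<beta> \<in> Phi_pos. sref \<beta> \<in> G0 \<and> \<beta> \<noteq> beta i} \<and>
             (\<forall>\<beta>\<in>F. c \<beta> > (0::real)) \<and>
             (\<forall>k. beta i k = (\<Sum>\<beta>\<in>F. c \<beta> * \<beta> k)))"
  proof
    assume "\<exists>F c. finite F \<and> F \<noteq> {} \<and>
             F \<subseteq> {\<beta> \<in> Phi_pos. sref \<beta> \<in> G0 \<and> \<beta> \<noteq> beta i} \<and>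
             (\<forall>\<beta>\<in>F. c \<beta> > (0::real)) \<and>
             (\<forall>k. beta i k = (\<Sum>\<beta>\<in>F. c \<beta> * \<beta> k))"
    then obtain F cc where F: "finite F" "F \<noteq> {}" "F \<subseteq> {\<beta> \<in> Phi_pos. sref \<beta> \<in> G0 \<and> \<beta> \<noteq> beta i}"
      "\<forall>\<beta>\<in>F. cc \<beta> > (0::real)" "\<forall>k. beta i k = (\<Sum>\<beta>\<in>F. cc \<beta> * \<beta> k)" by blast
    obtain \<beta> where b: "\<beta> \<in> F" using F(2) by blast
    have bp: "\<beta> \<in> Phi_pos" "sref \<beta> \<in> G0" "\<beta> \<noteq> beta i" using b F(3) by auto
    obtain a c where ac: "1 \<le> a" "a < c" "\<beta> = r a c" using Phi_pos_r[OF bp(1)] by blast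
    have oac: "odd a" "odd c" using sref_r_G_odd ac bp by auto
    have pos: "beta i k > 0" if "\<beta> k > 0" for k
    proof -
      have "cc \<beta> * \<beta> k \<le> (\<Sum>\<beta>'\<in>F. cc \<beta>' * \<beta>' k)"
      proof (rule member_le_sum[OF b _ F(1)])
        fix x assume "x \<in> F - {\<beta>}"
        then have "x \<in> Phi_pos" "cc x > 0" using F(3,4) by auto
        then show "0 \<le> cc x * x k" by (simp add: Phi_pos_def)
      qed
      moreover have "cc \<beta> * \<beta> k > 0" using that F(4) b by simp
      ultimately show ?thesis using F(5) by simp
    qed
    have bi: "beta i k > 0 \<longleftrightarrow> 2*i - 1 \<le> k \<and> k < 2*i + 1" for k
      using i by (simp add: beta_r r_def E_def)
    have "\<beta> a > 0" using ac by (simp add: r_def E_def)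
    then have "2*i - 1 \<le> a \<and> a < 2*i + 1" using pos bi by blast
    then have a: "a = 2*i - 1" using oac(1) i by presburger
    have "a \<le> c - 1" "\<not> c \<le> c - 1" using ac by auto
    then have "\<beta> (c - 1) > 0" using ac by (simp add: r_def E_def)
    then have "2*i - 1 \<le> c - 1 \<and> c - 1 < 2*i + 1" using pos bi by blast
    then have "c = 2*i + 1" using oac(2) i ac a by presburger
    then have "\<beta> = beta i" using a ac i by (simp add: beta_r)
    then show False using bp(3) by simp
  qed
  have "sref (beta i) \<in> G0" using e_G[OF i] .
  then show ?thesis using nc beta_Phi_pos[OF i] unfolding Pi_of_def by blast
qed

lemma S_of_G0: "S_of G0 = Xset"
proof -
  have "Pi_of G0 = {beta i | i. i \<ge> 1}" using Pi_sub beta_in_Pi by blast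
  then show ?thesis unfolding S_of_def Xset_def by auto
qed


abbreviation cj :: "lmap \<Rightarrow> lmap \<Rightarrow> lmap" where
  "cj w u \<equiv> w \<circ> u \<circ> inv\<^bsub>Wgrp\<^esub> w"

lemma conj_gen:
  assumes w: "w \<in> Wset" and A: "A \<subseteq> Wset"
  shows "{w \<circ> u \<circ> inv\<^bsub>Wgrp\<^esub> w | u. u \<in> genW A} = genW (cj w ` A)"
proof -
  have iw: "inv\<^bsub>Wgrp\<^esub> w \<in> Wset" "inv\<^bsub>Wgrp\<^esub> w \<circ> w = id" using W_inv_props[OF w] by auto
  have hom: "cj w \<in> hom Wgrp Wgrp"
  proof (rule homI)
    fix x assume "x \<in> carrier Wgrp"
    then show "cj w x \<in> carrier Wgrp" using w iw W_comp by simp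
  next
    fix x y assume "x \<in> carrier Wgrp" "y \<in> carrier Wgrp"
    have "cj w x \<circ> cj w y = w \<circ> x \<circ> (inv\<^bsub>Wgrp\<^esub> w \<circ> w) \<circ> y \<circ> inv\<^bsub>Wgrp\<^esub> w"
      by (simp add: comp_assoc)
    also have "\<dots> = cj w (x \<circ> y)" using iw by (simp add: comp_assoc)
    finally show "cj w (x \<otimes>\<^bsub>Wgrp\<^esub> y) = cj w x \<otimes>\<^bsub>Wgrp\<^esub> cj w y" by simp
  qed
  have gh: "group_hom Wgrp Wgrp (cj w)"
    unfolding group_hom_def group_hom_axioms_def using group_W hom by simp
  have "generate Wgrp (cj w ` A) = cj w ` generate Wgrp A"
    using group_hom.generate_img[OF gh] A by simp
  then show ?thesis unfolding genW_def by auto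
qed

lemma parabolic_alt:
  assumes "parabolic H"
  shows "\<exists>w\<in>Wset. \<exists>I. I \<subseteq> Sgen \<and> H = {w \<circ> u \<circ> inv\<^bsub>Wgrp\<^esub> w | u. u \<in> genW I}"
  using assms unfolding parabolic_def by blast

lemma Sgen_W: "Sgen \<subseteq> Wset"
  using s_W by (auto simp: Sgen_def)

lemma parabolic_subgroup: "parabolic H \<Longrightarrow> subgroup H Wgrp"
proof -
  assume "parabolic H"
  then obtain w I where wI: "w \<in> Wset" "I \<subseteq> Sgen" "H = {w \<circ> u \<circ> inv\<^bsub>Wgrp\<^esub> w | u. u \<in> genW I}"
    unfolding parabolic_def by blast
  have IW: "I \<subseteq> Wset" using wI(2) Sgen_W by blast
  have "cj w ` I \<subseteq> Wset" using IW wI(1) W_inv_props W_comp by auto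
  then show ?thesis using wI(3) conj_gen[OF wI(1) IW] genW_subgroup by simp
qed

lemma conj_transpose:
  assumes "bij p"
  shows "p \<circ> Transposition.transpose a b \<circ> ivf p = Transposition.transpose (p a) (p b)"
proof (rule ext)
  fix x
  have ia: "ivf p (p a) = a" "ivf p (p b) = b" using bij_is_inj[OF assms] by (simp_all add: inv_f_f)
  have pi: "p (ivf p y) = y" for y using bij_is_surj[OF assms] by (simp add: surj_f_inv_f)
  have "ivf p x = a \<longleftrightarrow> x = p a" "ivf p x = b \<longleftrightarrow> x = p b"
    using ia pi by metis+
  then show "(p \<circ> Transposition.transpose a b \<circ> ivf p) x = Transposition.transpose (p a) (p b) x"
    using ia pi by (auto simp: transpose_def)
qed

definition rho :: "nat \<Rightarrow> nat \<Rightarrow> nat" where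
  "rho i x = (if i < x \<and> x \<le> 2*i then 2*(x - i) - 1 else if 1 \<le> x \<and> x \<le> i then 2*x else x)"

lemma rho_permutes: "rho i permutes {1..2*i}"
proof (rule inj_imp_permutes)
  show "inj_on (rho i) {1..2*i}"
  proof (rule inj_onI)
    fix x y assume "x \<in> {1..2*i}" "y \<in> {1..2*i}" "rho i x = rho i y"
    then show "x = y" unfolding rho_def by (auto split: if_splits) presburger+
  qed
qed (auto simp: rho_def)

lemma Perm_conj3:
  assumes "pos a" "pos b" "pos c"
  shows "Perm a \<circ> Perm b \<circ> Perm c = Perm (c \<circ> b \<circ> a)"
  using assms by (simp add: Perm_o pos_comp comp_assoc)

lemma conj_s:
  assumes p: "p permutes {1..n}" and k: "k \<ge> 1"
  shows "cj (Perm (ivf p)) (s k) = Perm (Transposition.transpose (p k) (p (Suc k)))"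
proof -
  have ip: "ivf p permutes {1..n}" by (rule permutes_inv[OF p])
  have "inv\<^bsub>Wgrp\<^esub> (Perm (ivf p)) = Perm p"
    using Perm_inv_W[OF ip] permutes_inv_inv[OF p] by simp
  then have "cj (Perm (ivf p)) (s k) = Perm (ivf p) \<circ> Perm (Transposition.transpose k (Suc k)) \<circ> Perm p"
    using k by (simp add: s_Perm)
  also have "\<dots> = Perm (p \<circ> Transposition.transpose k (Suc k) \<circ> ivf p)"
    using k by (intro Perm_conj3 pos_permutes[OF ip] pos_transpose pos_permutes[OF p]) auto
  also have "\<dots> = Perm (Transposition.transpose (p k) (p (Suc k)))"
    using conj_transpose[OF permutes_bij[OF p]] by simp
  finally show ?thesis .
qed

lemma gens_conj:
  assumes i: "i \<ge> 1"
  shows "cj (Perm (ivf (rho i))) ` {s k | k. k \<ge> i + 1} =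
    {sref (beta j) | j. 1 \<le> j \<and> j \<le> i} \<union> {s k | k. k \<ge> 2*i + 1}"
proof -
  have cs: "cj (Perm (ivf (rho i))) (s k) =
      (if k \<le> 2*i then sref (beta (k - i)) else s k)" if "k \<ge> i + 1" for k
  proof -
    have e: "cj (Perm (ivf (rho i))) (s k) = Perm (Transposition.transpose (rho i k) (rho i (Suc k)))"
      using that by (intro conj_s[OF rho_permutes]) auto
    show ?thesis
    proof (cases "k \<le> 2*i")
      case True
      have "rho i k = 2*(k - i) - 1" "rho i (Suc k) = 2*(k - i) + 1"
        using True that by (auto simp: rho_def)
      then show ?thesis using e True that by (simp add: sref_beta tb_def)
    next
      case False
      have "rho i k = k" "rho i (Suc k) = Suc k" using False by (auto simp: rho_def)
      then show ?thesis using e False that by (simp add: s_Perm)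
    qed
  qed
  show ?thesis
  proof (rule equalityI; rule subsetI)
    fix x assume "x \<in> cj (Perm (ivf (rho i))) ` {s k | k. k \<ge> i + 1}"
    then obtain k where k: "k \<ge> i + 1" "x = cj (Perm (ivf (rho i))) (s k)" by blast
    show "x \<in> {sref (beta j) | j. 1 \<le> j \<and> j \<le> i} \<union> {s k | k. k \<ge> 2*i + 1}"
    proof (cases "k \<le> 2*i")
      case True
      then have "x = sref (beta (k - i))" using cs[OF k(1)] k by simp
      moreover have "1 \<le> k - i" "k - i \<le> i" using True k by auto
      ultimately show ?thesis by blast
    next
      case False
      then have "x = s k" using cs[OF k(1)] k by simp
      then show ?thesis using False by auto
    qed
  next
    fix x assume "x \<in> {sref (beta j) | j. 1 \<le> j \<and> j \<le> i} \<union> {s k | k. k \<ge> 2*i + 1}"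
    then consider j where "1 \<le> j" "j \<le> i" "x = sref (beta j)" | k where "k \<ge> 2*i + 1" "x = s k" by blast
    then show "x \<in> cj (Perm (ivf (rho i))) ` {s k | k. k \<ge> i + 1}"
    proof cases
      case 1
      then have "x = cj (Perm (ivf (rho i))) (s (j + i))" using cs[of "j + i"] by simp
      moreover have "j + i \<ge> i + 1" using 1 by simp
      ultimately show ?thesis by blast
    next
      case 2
      then have "x = cj (Perm (ivf (rho i))) (s k)" using cs[of k] by simp
      moreover have "k \<ge> i + 1" using 2 by simp
      ultimately show ?thesis by blast
    qed
  qed
qed

lemma Gsub_parabolic: assumes i: "i \<ge> 1" shows "parabolic (Gsub i)"
proof -
  define w where "w = Perm (ivf (rho i))"
  have wW: "w \<in> Wset" unfolding w_def using Perm_W[OF permutes_inv[OF rho_permutes]] .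
  define I where "I = {s k | k. k \<ge> i + 1}"
  have IS: "I \<subseteq> Sgen" unfolding I_def Sgen_def by auto
  have IW: "I \<subseteq> Wset" using IS Sgen_W by blast
  have "{w \<circ> u \<circ> inv\<^bsub>Wgrp\<^esub> w | u. u \<in> genW I} = genW (cj w ` I)" by (rule conj_gen[OF wW IW])
  also have "\<dots> = Gsub i" unfolding Gsub_def w_def I_def using gens_conj[OF i] by simp
  finally show ?thesis unfolding parabolic_def using wW IS by blast
qed

lemma sb_prod: assumes j: "j \<ge> 1"
  shows "sref (beta j) = s (2*j - 1) \<circ> s (2*j) \<circ> s (2*j - 1)"
proof -
  define a where "a = 2*j - 1"
  have a1: "a \<ge> 1" "2*j = Suc a" "2*j + 1 = Suc (Suc a)" using j by (auto simp: a_def)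
  have eq: "tb j = Transposition.transpose a (Suc a) \<circ> Transposition.transpose (Suc a) (Suc (Suc a))
     \<circ> Transposition.transpose a (Suc a)"
    unfolding tb_def a1(3) a_def[symmetric] by (auto simp: fun_eq_iff transpose_def)
  have "Perm (tb j) = Perm (Transposition.transpose a (Suc a)) \<circ> Perm (Transposition.transpose (Suc a) (Suc (Suc a)))
     \<circ> Perm (Transposition.transpose a (Suc a))"
    unfolding eq using a1 by (intro Perm_conj3[symmetric] pos_transpose) auto
  then show ?thesis using j a1 by (simp add: sref_beta s_Perm a_def[symmetric])
qed

lemma Gsub_gens_W: "{sref (beta j) | j. 1 \<le> j \<and> j \<le> i} \<union> {s k | k. k \<ge> 2*i + 1} \<subseteq> Wset"
proof (rule subsetI)
  fix x assume "x \<in> {sref (beta j) | j. 1 \<le> j \<and> j \<le> i} \<union> {s k | k. k \<ge> 2*i + 1}"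
  then consider j where "1 \<le> j" "x = sref (beta j)" | k where "k \<ge> 2*i+1" "x = s k" by blast
  then show "x \<in> Wset"
  proof cases
    case 1 then show ?thesis using sref_beta_W by simp
  next
    case 2 then show ?thesis using s_W[of k] by simp
  qed
qed

lemma Gsub_W: "Gsub i \<subseteq> Wset"
  unfolding Gsub_def using genW_W[OF Gsub_gens_W] .

lemma Gsub_subgroup: "subgroup (Gsub i) Wgrp"
  unfolding Gsub_def using genW_subgroup[OF Gsub_gens_W] .

lemma Gsub_s: "k \<ge> 2*i + 1 \<Longrightarrow> s k \<in> Gsub i"
  unfolding Gsub_def by (rule subsetD[OF genW_incl]) blast

lemma Gsub_beta: "1 \<le> j \<Longrightarrow> j \<le> i \<Longrightarrow> sref (beta j) \<in> Gsub i"
  unfolding Gsub_def by (rule subsetD[OF genW_incl]) blast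

lemma Gsub_comp: "x \<in> Gsub i \<Longrightarrow> y \<in> Gsub i \<Longrightarrow> x \<circ> y \<in> Gsub i"
  unfolding Gsub_def by (rule genW_comp)

lemma Gsub_beta_big: "j \<ge> 1 \<Longrightarrow> 2*j - 1 \<ge> 2*i + 1 \<Longrightarrow> sref (beta j) \<in> Gsub i"
proof -
  assume j: "j \<ge> 1" "2*j - 1 \<ge> 2*i + 1"
  have "s (2*j - 1) \<in> Gsub i" "s (2*j) \<in> Gsub i" using j by (auto intro: Gsub_s)
  then show ?thesis using sb_prod[OF j(1)] Gsub_comp by simp
qed

lemma G0_Gsub: "i \<ge> 1 \<Longrightarrow> G0 \<subseteq> Gsub i"
proof (rule genW_min[OF _ Gsub_subgroup])
  show "Xset \<subseteq> Gsub i"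
  proof
    fix x assume "x \<in> Xset"
    then obtain j where j: "j \<ge> 1" "x = sref (beta j)" by (auto simp: Xset_def)
    show "x \<in> Gsub i"
    proof (cases "j \<le> i")
      case True then show ?thesis using j Gsub_beta by simp
    next
      case False then show ?thesis using j Gsub_beta_big[of j i] by simp
    qed
  qed
qed

lemma Gsub_mono: "Gsub (i + 1) \<subseteq> Gsub i"
  unfolding Gsub_def[of "i+1"]
proof (rule genW_min[OF _ Gsub_subgroup])
  show "{sref (beta j) | j. 1 \<le> j \<and> j \<le> i + 1} \<union> {s k | k. k \<ge> 2*(i+1) + 1} \<subseteq> Gsub i"
  proof
    fix x assume "x \<in> {sref (beta j) | j. 1 \<le> j \<and> j \<le> i + 1} \<union> {s k | k. k \<ge> 2*(i+1) + 1}"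
    then consider j where "1 \<le> j" "j \<le> i + 1" "x = sref (beta j)" | k where "k \<ge> 2*(i+1)+1" "x = s k"
      by blast
    then show "x \<in> Gsub i"
    proof cases
      case 1
      show ?thesis
      proof (cases "j \<le> i")
        case True then show ?thesis using 1 Gsub_beta by simp
      next
        case False then show ?thesis using 1 Gsub_beta_big[of j i] by simp
      qed
    next
      case 2 then show ?thesis using Gsub_s[of i k] by simp
    qed
  qed
qed

lemma Gsub_fix:
  assumes g: "g \<in> Gsub i" and k: "even k" "2 \<le> k" "k \<le> 2*i"
  shows "g (E k) = E k"
proof -
  have "g \<in> Wset \<and> g (E k) = E k"
  proof (rule gen_fix[OF Gsub_gens_W _ g[unfolded Gsub_def]])
    fix a assume "a \<in> {sref (beta j) | j. 1 \<le> j \<and> j \<le> i} \<union> {s k | k. k \<ge> 2*i + 1}"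
    then consider j where "1 \<le> j" "j \<le> i" "a = sref (beta j)" | m where "m \<ge> 2*i+1" "a = s m"
      by blast
    then show "a (E k) = E k"
    proof cases
      case 1
      have "Perm (tb j) (E k) = E (tb j k)" unfolding tb_def using 1 k by (intro PermT_E) auto
      then show ?thesis using 1 tb_even[OF 1(1) k(1)] by (simp add: sref_beta)
    next
      case 2
      have "Perm (Transposition.transpose m (Suc m)) (E k) = E (Transposition.transpose m (Suc m) k)"
        using 2 k by (intro PermT_E) auto
      moreover have "Transposition.transpose m (Suc m) k = k" using 2 k by simp
      ultimately show ?thesis using 2 by (simp add: s_Perm)
    qed
  qed
  then show ?thesis by simp
qed

lemma s_moves: "k \<ge> 1 \<Longrightarrow> s k (E (Suc k)) \<noteq> E (Suc k)"
proof
  assume k: "k \<ge> 1" and e: "s k (E (Suc k)) = E (Suc k)"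
  have "s k (E (Suc k)) = E k" using k by (simp add: s_Perm PermT_E)
  then show False using e E_inj[of k "Suc k"] k by simp
qed

lemma Gsub_strict: "i \<ge> 1 \<Longrightarrow> Gsub (i + 1) \<subset> Gsub i"
proof -
  assume i: "i \<ge> 1"
  have "s (2*i + 1) \<in> Gsub i" by (rule Gsub_s) simp
  moreover have "s (2*i + 1) \<notin> Gsub (i + 1)"
  proof
    assume "s (2*i + 1) \<in> Gsub (i + 1)"
    then have "s (2*i + 1) (E (2*i + 2)) = E (2*i + 2)" by (rule Gsub_fix) auto
    then show False using s_moves[of "2*i + 1"] by simp
  qed
  ultimately show ?thesis using Gsub_mono by blast
qed

lemma Inter_Gsub: "\<Inter>{Gsub i | i. i \<ge> 1} = G0"
proof
  show "G0 \<subseteq> \<Inter>{Gsub i | i. i \<ge> 1}" using G0_Gsub by blast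
next
  show "\<Inter>{Gsub i | i. i \<ge> 1} \<subseteq> G0"
  proof
    fix g assume g: "g \<in> \<Inter>{Gsub i | i. i \<ge> 1}"
    then have gi: "g \<in> Gsub i" if "i \<ge> 1" for i using that by blast
    have gW: "g \<in> Wset" using gi[of 1] Gsub_W by blast
    obtain N where N: "\<forall>k>N. g (E k) = E k" using W_fix_large[OF gW] by blast
    obtain q n where q: "q permutes {1..n}" "g = Perm q" using W_Perm[OF gW] by blast
    have "q k = k" if "even k" for k
    proof (cases "k = 0")
      case True then show ?thesis using permutes_0[OF q(1)] by simp
    next
      case False
      then have k2: "k \<ge> 2" using that by presburger
      have "g (E k) = E k"
      proof (cases "k > N")
        case True then show ?thesis using N by simp
      next
        case False
        then show ?thesis using gi[of "max N 1"] that k2 by (intro Gsub_fix[of g "max N 1"]) auto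
      qed
      then show ?thesis using W_fix_Perm[OF q(1)] q(2) k2 by simp
    qed
    then show "g \<in> G0" using qG_G[OF q(1)] q(2) by blast
  qed
qed


lemma s_E: "k \<ge> 1 \<Longrightarrow> m \<ge> 1 \<Longrightarrow> s k (E m) = E (Transposition.transpose k (Suc k) m)"
  by (simp add: s_Perm PermT_E)

lemma not_parabolic_G0: "\<not> parabolic G0"
proof
  assume "parabolic G0"
  then obtain w I where wI: "w \<in> Wset" "I \<subseteq> Sgen" "G0 = {w \<circ> u \<circ> inv\<^bsub>Wgrp\<^esub> w | u. u \<in> genW I}"
    unfolding parabolic_def by blast
  have iw: "inv\<^bsub>Wgrp\<^esub> w \<circ> w = id" using W_inv_props[OF wI(1)] by simp
  have IW: "I \<subseteq> Wset" using wI(2) Sgen_W by blast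
  obtain N where N: "\<forall>k>N. w (E k) = E k" using W_fix_large[OF wI(1)] by blast
  have iN: "(inv\<^bsub>Wgrp\<^esub> w) (E k) = E k" if "k > N" for k
  proof -
    have "(inv\<^bsub>Wgrp\<^esub> w) (w (E k)) = E k" using iw by (metis comp_apply id_apply)
    then show ?thesis using N that by simp
  qed
  have memG: "w \<circ> u \<circ> inv\<^bsub>Wgrp\<^esub> w \<in> G0" if uI: "u \<in> genW I" for u
  proof -
    have "w \<circ> u \<circ> inv\<^bsub>Wgrp\<^esub> w \<in> {w \<circ> u \<circ> inv\<^bsub>Wgrp\<^esub> w | u. u \<in> genW I}"
      using uI by blast
    then show ?thesis using wI(3) by simp
  qed
  show False
  proof (cases "\<exists>k. k \<ge> 1 \<and> k > N \<and> s k \<in> I")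
    case True
    then obtain k where k: "k \<ge> 1" "k > N" "s k \<in> I" by blast
    define m where "m = (if even k then k else Suc k)"
    define m' where "m' = (if even k then Suc k else k)"
    have mm: "even m" "m \<ge> 2" "m > N" "m' > N" "m' \<ge> 1" "m \<noteq> m'"
      using k unfolding m_def m'_def by (cases "even k"; simp; presburger)+
    have "Transposition.transpose k (Suc k) m = m'" unfolding m_def m'_def by (cases "even k") simp_all
    then have sm: "s k (E m) = E m'" using k s_E[of k m] mm by simp
    have "(w \<circ> s k \<circ> inv\<^bsub>Wgrp\<^esub> w) (E m) = E m'"
      using iN[OF mm(3)] sm N mm(4) by simp
    moreover have "(w \<circ> s k \<circ> inv\<^bsub>Wgrp\<^esub> w) (E m) = E m"
      using G_fix[OF memG[OF subsetD[OF genW_incl k(3)]] mm(1,2)] by simp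
    ultimately show False using E_inj[of m' m] mm by auto
  next
    case False
    have fixI: "x (E m) = E m" if xI: "x \<in> I" and mN: "m \<ge> N + 2" for x m
    proof -
      obtain k where k: "k \<ge> 1" "x = s k" using xI wI(2) by (auto simp: Sgen_def)
      then have "k \<le> N" using False xI by (metis not_le)
      then show ?thesis using k mN s_E[of k m] by (simp add: transpose_def)
    qed
    define j where "j = N + 2"
    define a where "a = 2*j - 1"
    have ja: "j \<ge> 1" "a \<ge> N + 2" "a > N" "a \<ge> 1" by (auto simp: j_def a_def)
    have "sref (beta j) \<in> G0" using e_G ja by simp
    then have "sref (beta j) \<in> {w \<circ> u \<circ> inv\<^bsub>Wgrp\<^esub> w | u. u \<in> genW I}" using wI(3) by simp
    then obtain u where u: "u \<in> genW I" "sref (beta j) = w \<circ> u \<circ> inv\<^bsub>Wgrp\<^esub> w" by blast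
    have fa: "\<And>x. x \<in> I \<Longrightarrow> x (E a) = E a" using fixI ja(2) by blast
    have "u \<in> Wset \<and> u (E a) = E a" by (rule gen_fix[OF IW _ u(1)]) (rule fa)
    then have "u (E a) = E a" by simp
    then have "sref (beta j) (E a) = E a" using u(2) iN[OF ja(3)] N ja(3) by simp
    moreover have "sref (beta j) (E a) = E (2*j + 1)"
    proof -
      have tba: "tb j a = 2*j + 1" unfolding tb_def a_def by simp
      have "Perm (tb j) (E a) = E (tb j a)" unfolding tb_def using ja(1,4) by (intro PermT_E) auto
      moreover have "sref (beta j) = Perm (tb j)" using ja(1) by (rule sref_beta)
      ultimately show ?thesis using tba by simp
    qed
    ultimately have "E a = E (2*j + 1)" by simp
    moreover have "a \<noteq> 2*j + 1" unfolding a_def by simp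
    ultimately show False using E_inj[of a "2*j + 1"] ja(4) by simp
  qed
qed

lemma closure_G0: "parabolic_closure Xset = G0"
proof
  show "parabolic_closure Xset \<subseteq> G0"
  proof -
    have "\<Inter>{Y. parabolic Y \<and> Xset \<subseteq> Y} \<subseteq> \<Inter>{Gsub i | i. i \<ge> 1}"
    proof (rule Inter_greatest)
      fix Z assume "Z \<in> {Gsub i | i. i \<ge> 1}"
      then obtain i where i: "i \<ge> 1" "Z = Gsub i" by blast
      have "Xset \<subseteq> Gsub i" using G0_Gsub[OF i(1)] genW_incl by blast
      then have "Gsub i \<in> {Y. parabolic Y \<and> Xset \<subseteq> Y}" using Gsub_parabolic[OF i(1)] by simp
      then show "\<Inter>{Y. parabolic Y \<and> Xset \<subseteq> Y} \<subseteq> Z" using i by blast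
    qed
    then show ?thesis unfolding parabolic_closure_def using Inter_Gsub by simp
  qed
next
  show "G0 \<subseteq> parabolic_closure Xset"
    unfolding parabolic_closure_def
  proof (rule Inter_greatest)
    fix K assume "K \<in> {Y. parabolic Y \<and> Xset \<subseteq> Y}"
    then show "G0 \<subseteq> K" using genW_min parabolic_subgroup by blast
  qed
qed


theorem mainTheorem8:
  shows "S_of (genW Xset) = Xset \<and>
    coxeter_system_A_inf TYPE('h) (Wgrp\<lparr>carrier := genW Xset\<rparr>) Xset \<and>
    \<not> parabolic (genW Xset) \<and>
    (\<forall>i\<ge>1. parabolic (Gsub i) \<and> genW Xset \<subseteq> Gsub i) \<and>
    (\<forall>i\<ge>1. Gsub (i + 1) \<subset> Gsub i) \<and>
    \<Inter>{Gsub i | i. i \<ge> 1} = genW Xset \<and>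
    parabolic_closure Xset = genW Xset \<and>
    \<not> parabolic (parabolic_closure Xset)"
proof -
  have c: "coxeter_system_A_inf TYPE('h) (Wgrp\<lparr>carrier := genW Xset\<rparr>) Xset" by (rule cox_A)
  have p: "\<forall>i\<ge>1. parabolic (Gsub i) \<and> genW Xset \<subseteq> Gsub i"
    using Gsub_parabolic G0_Gsub by blast
  have m: "\<forall>i\<ge>1. Gsub (i + 1) \<subset> Gsub i" using Gsub_strict by blast
  show ?thesis using S_of_G0 c not_parabolic_G0 p m Inter_Gsub closure_G0 by simp
qed

end
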